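(* Let $L$ be a finite-dimensional Lie superalgebra, let $0\to R\to F\xrightarrow{\pi}L\to 0$ be a free presentation of $L$, and let $D=(R\cap F')/[F,R]$. Then: (1) $\dim D\le\dim\mathrm{Ker}(\lambda)$ whenever $(T,\lambda)\in C(L)$ is a universal element; (2) for every $(K,\psi)\in C(L)$, $\mathrm{Ker}(\psi)$ is a homomorphic image of $D$.
   Context: Lie superalgebras over a field of characteristic $\neq 2,3$; homomorphisms are even. A free presentation of $L$ is a free Lie superalgebra $F$ on a $\mathbb{Z}_2$-graded set with a surjective homomorphism $\pi:F\to L$, $R=\mathrm{Ker}(\pi)$; $F'=[F,F]$. $C(L)$ is the class of pairs $(K,\lambda)$ with $\lambda:K\to L$ a surjective homomorphism and $\mathrm{Ker}(\lambda)\subseteq[K,K]\cap Z(K)$, where $Z(K)$ is the center. $(T,\sigma)\in C(L)$ is universal if for every $(K,\lambda)\in C(L)$ there is a homomorphism $\tau:T\to K$ with $\lambda\circ\tau=\sigma$. *)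

theory Defs
  imports "HOL.Vector_Spaces"
begin

text \<open>A Lie superalgebra over the field 'k, realised inside an ambient vector space
  (a type 'a with a scalar multiplication sc making it a 'k-vector space):
  carrier subspace carr = ev + od (direct), with a super bracket br.\<close>

record ('k, 'a) lsa =
  sc   :: "'k \<Rightarrow> 'a \<Rightarrow> 'a"
  carr :: "'a set"
  ev   :: "'a set"
  od   :: "'a set"
  br   :: "'a \<Rightarrow> 'a \<Rightarrow> 'a"

definition par :: "('k, 'a) lsa \<Rightarrow> bool \<Rightarrow> 'a set" where
  "par A p = (if p then od A else ev A)"

definition sgn_if :: "bool \<Rightarrow> 'a::ab_group_add \<Rightarrow> 'a" where
  "sgn_if b v = (if b then - v else v)"

definition lie_superalgebra :: "('k::field, 'a::ab_group_add) lsa \<Rightarrow> bool" where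
  "lie_superalgebra A \<longleftrightarrow>
     vector_space (sc A) \<and>
     module.subspace (sc A) (carr A) \<and>
     module.subspace (sc A) (ev A) \<and> module.subspace (sc A) (od A) \<and>
     ev A \<inter> od A = {0} \<and>
     carr A = {x + y | x y. x \<in> ev A \<and> y \<in> od A} \<and>
     (\<forall>x\<in>carr A. \<forall>y\<in>carr A. br A x y \<in> carr A) \<and>
     (\<forall>x\<in>carr A. \<forall>y\<in>carr A. \<forall>z\<in>carr A.
        br A (x + y) z = br A x z + br A y z \<and> br A z (x + y) = br A z x + br A z y) \<and>
     (\<forall>c. \<forall>x\<in>carr A. \<forall>y\<in>carr A.
        br A (sc A c x) y = sc A c (br A x y) \<and> br A x (sc A c y) = sc A c (br A x y)) \<and>
     (\<forall>p q. \<forall>x\<in>par A p. \<forall>y\<in>par A q. br A x y \<in> par A (p \<noteq> q)) \<and>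
     (\<forall>p q. \<forall>x\<in>par A p. \<forall>y\<in>par A q. br A x y = - sgn_if (p \<and> q) (br A y x)) \<and>
     (\<forall>p q r. \<forall>x\<in>par A p. \<forall>y\<in>par A q. \<forall>z\<in>par A r.
        sgn_if (p \<and> r) (br A x (br A y z)) + sgn_if (q \<and> p) (br A y (br A z x))
        + sgn_if (r \<and> q) (br A z (br A x y)) = 0)"

definition finite_dim :: "('k::field, 'a::ab_group_add) lsa \<Rightarrow> bool" where
  "finite_dim A \<longleftrightarrow> (\<exists>B. finite B \<and> B \<subseteq> carr A \<and> carr A \<subseteq> module.span (sc A) B)"

definition lsa_hom :: "('k::field, 'a::ab_group_add) lsa \<Rightarrow> ('k, 'b::ab_group_add) lsa
     \<Rightarrow> ('a \<Rightarrow> 'b) \<Rightarrow> bool" where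
  "lsa_hom A B f \<longleftrightarrow>
     f ` carr A \<subseteq> carr B \<and> f ` ev A \<subseteq> ev B \<and> f ` od A \<subseteq> od B \<and>
     (\<forall>x\<in>carr A. \<forall>y\<in>carr A. f (x + y) = f x + f y) \<and>
     (\<forall>c. \<forall>x\<in>carr A. f (sc A c x) = sc B c (f x)) \<and>
     (\<forall>x\<in>carr A. \<forall>y\<in>carr A. f (br A x y) = br B (f x) (f y))"

definition lsa_ker :: "('k, 'a) lsa \<Rightarrow> ('a \<Rightarrow> 'b::zero) \<Rightarrow> 'a set" where
  "lsa_ker A f = {x \<in> carr A. f x = 0}"

definition brs :: "('k::field, 'a::ab_group_add) lsa \<Rightarrow> 'a set \<Rightarrow> 'a set \<Rightarrow> 'a set" where
  "brs A I J = module.span (sc A) {br A x y | x y. x \<in> I \<and> y \<in> J}"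

definition center :: "('k, 'a::zero) lsa \<Rightarrow> 'a set" where
  "center A = {z \<in> carr A. \<forall>x\<in>carr A. br A z x = 0}"

definition in_C :: "('k::field, 'l::ab_group_add) lsa \<Rightarrow> ('k, 'a::ab_group_add) lsa
     \<Rightarrow> ('a \<Rightarrow> 'l) \<Rightarrow> bool" where
  "in_C L K lam \<longleftrightarrow> lie_superalgebra K \<and> lsa_hom K L lam \<and> lam ` carr K = carr L \<and>
     lsa_ker K lam \<subseteq> brs K (carr K) (carr K) \<inter> center K"

text \<open>universality of (T, sigma) in C(L), tested against all (K, lam) in C(L) whose
  underlying ambient type is 'm\<close>
definition universal_wrt :: "'m::ab_group_add itself \<Rightarrow> ('k::field, 'l::ab_group_add) lsa
     \<Rightarrow> ('k, 't::ab_group_add) lsa \<Rightarrow> ('t \<Rightarrow> 'l) \<Rightarrow> bool" where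
  "universal_wrt _ L T sigma \<longleftrightarrow> in_C L T sigma \<and>
     (\<forall>(K :: ('k, 'm::ab_group_add) lsa) lam. in_C L K lam \<longrightarrow>
        (\<exists>tau. lsa_hom T K tau \<and> (\<forall>x\<in>carr T. lam (tau x) = sigma x)))"

text \<open>F is the free Lie superalgebra on the Z2-graded set X = X0 (even) \<union> X1 (odd),
  identified with its image in F; universal property tested against all Lie
  superalgebras with ambient type 'm\<close>
definition free_wrt :: "'m::ab_group_add itself \<Rightarrow> ('k::field, 'f::ab_group_add) lsa \<Rightarrow> 'f set \<Rightarrow> 'f set \<Rightarrow> bool" where
  "free_wrt _ F X0 X1 \<longleftrightarrow> lie_superalgebra F \<and> X0 \<subseteq> ev F \<and> X1 \<subseteq> od F \<and> X0 \<inter> X1 = {} \<and>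
     (\<forall>(M :: ('k, 'm::ab_group_add) lsa) g. lie_superalgebra M \<and> g ` X0 \<subseteq> ev M \<and> g ` X1 \<subseteq> od M \<longrightarrow>
        (\<exists>phi. lsa_hom F M phi \<and> (\<forall>x\<in>X0 \<union> X1. phi x = g x)) \<and>
        (\<forall>phi phi'. lsa_hom F M phi \<and> lsa_hom F M phi' \<and> (\<forall>x\<in>X0 \<union> X1. phi x = g x \<and> phi' x = g x)
           \<longrightarrow> (\<forall>y\<in>carr F. phi y = phi' y)))"

text \<open>dimension of the quotient space U/W (W \<subseteq> U), as the least size of a finite
  set B \<subseteq> U with U \<subseteq> span (B \<union> W)\<close>
definition quot_dim :: "('k::field \<Rightarrow> 'a::ab_group_add \<Rightarrow> 'a) \<Rightarrow> 'a set \<Rightarrow> 'a set \<Rightarrow> nat" where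
  "quot_dim s U W = (LEAST n. \<exists>B. finite B \<and> card B = n \<and> B \<subseteq> U \<and> U \<subseteq> module.span s (B \<union> W))"

text \<open>h : U \<rightarrow> carr B induces an (even) homomorphism of Lie superalgebras from the quotient
  U/W (U a subalgebra of A, W an ideal of U) to B: the literal unfolding of a
  homomorphism out of a quotient.\<close>
definition quot_hom :: "('k::field, 'a::ab_group_add) lsa \<Rightarrow> 'a set \<Rightarrow> 'a set
     \<Rightarrow> ('k, 'b::ab_group_add) lsa \<Rightarrow> ('a \<Rightarrow> 'b) \<Rightarrow> bool" where
  "quot_hom A U W B h \<longleftrightarrow>
     h ` U \<subseteq> carr B \<and> h ` (U \<inter> ev A) \<subseteq> ev B \<and> h ` (U \<inter> od A) \<subseteq> od B \<and>
     (\<forall>x\<in>U. \<forall>y\<in>U. h (x + y) = h x + h y) \<and>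
     (\<forall>c. \<forall>x\<in>U. h (sc A c x) = sc B c (h x)) \<and>
     (\<forall>x\<in>W. h x = 0) \<and>
     (\<forall>x\<in>U. \<forall>y\<in>U. h (br A x y) = br B (h x) (h y))"

end

theory Submission
  imports Defs
begin


lemma par_simps[simp]: "par A False = ev A" "par A True = od A"
  by (simp_all add: par_def)

lemma sgn_if_simps[simp]: "sgn_if True v = - v" "sgn_if False v = v"
  by (simp_all add: sgn_if_def)

lemma (in vector_space) compl_exists:
  assumes U: "subspace U" and V: "subspace V" and UV: "U \<subseteq> V"
  obtains C where "subspace C" "C \<subseteq> V" "U \<inter> C \<subseteq> {0}" "\<forall>x\<in>V. \<exists>u\<in>U. \<exists>c\<in>C. x = u + c"
proof -
  obtain BU where BU: "BU \<subseteq> U" "independent BU" "U \<subseteq> span BU"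
    using maximal_independent_subset by blast
  obtain B where B: "BU \<subseteq> B" "B \<subseteq> V" "independent B" "V \<subseteq> span B"
    using maximal_independent_subset_extend[of BU V] BU UV by blast
  have spU: "span BU = U" using BU U span_subspace by blast
  define C where "C = span (B - BU)"
  have "subspace C" unfolding C_def by simp
  moreover have "C \<subseteq> V" unfolding C_def using B V by (meson Diff_subset span_minimal subset_trans)
  moreover have "U \<inter> C \<subseteq> {0}"
  proof
    fix x assume x: "x \<in> U \<inter> C"
    have x1: "x \<in> span BU" using x spU by auto
    have x2: "x \<in> span (B - BU)" using x C_def by auto
    have r1: "representation B x = representation BU x"
      by (rule representation_extend[OF B(3) x1 B(1)])
    have r2: "representation B x = representation (B - BU) x"
      by (rule representation_extend[OF B(3) x2]) auto
    have z: "representation B x b = 0" for b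
      using r1 r2 representation_ne_zero[of BU x b] representation_ne_zero[of "B - BU" x b]
      by (metis DiffD2)
    have xB: "x \<in> span B" using x1 span_mono[OF B(1)] by auto
    have "x = (\<Sum>b | representation B x b \<noteq> 0. representation B x b *s b)"
      using sum_nonzero_representation_eq[OF B(3) xB] by simp
    also have "\<dots> = 0" using z by simp
    finally show "x \<in> {0}" by simp
  qed
  moreover have "\<forall>x\<in>V. \<exists>u\<in>U. \<exists>c\<in>C. x = u + c"
  proof
    fix x assume "x \<in> V"
    then have "x \<in> span (BU \<union> (B - BU))" using B by (metis Un_Diff_cancel sup.absorb2 subsetD)
    then show "\<exists>u\<in>U. \<exists>c\<in>C. x = u + c" unfolding span_Un spU C_def by blast
  qed
  ultimately show ?thesis using that by blast
qed

context
  fixes A :: "('k::field, 'a::ab_group_add) lsa"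
  assumes A: "lie_superalgebra A"
begin

lemma lsaE:
  obtains "vector_space (sc A)" "module.subspace (sc A) (carr A)"
    "module.subspace (sc A) (ev A)" "module.subspace (sc A) (od A)"
    "ev A \<inter> od A = {0}" "carr A = {x + y | x y. x \<in> ev A \<and> y \<in> od A}"
    "\<forall>x\<in>carr A. \<forall>y\<in>carr A. br A x y \<in> carr A"
    "\<forall>x\<in>carr A. \<forall>y\<in>carr A. \<forall>z\<in>carr A.
        br A (x + y) z = br A x z + br A y z \<and> br A z (x + y) = br A z x + br A z y"
    "\<forall>c. \<forall>x\<in>carr A. \<forall>y\<in>carr A.
        br A (sc A c x) y = sc A c (br A x y) \<and> br A x (sc A c y) = sc A c (br A x y)"
    "\<forall>p q. \<forall>x\<in>par A p. \<forall>y\<in>par A q. br A x y \<in> par A (p \<noteq> q)"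
    "\<forall>p q. \<forall>x\<in>par A p. \<forall>y\<in>par A q. br A x y = - sgn_if (p \<and> q) (br A y x)"
    "\<forall>p q r. \<forall>x\<in>par A p. \<forall>y\<in>par A q. \<forall>z\<in>par A r.
        sgn_if (p \<and> r) (br A x (br A y z)) + sgn_if (q \<and> p) (br A y (br A z x))
        + sgn_if (r \<and> q) (br A z (br A x y)) = 0"
  using A[unfolded lie_superalgebra_def] by (elim conjE) (rule that; assumption)

lemma vsA: "vector_space (sc A)" by (rule lsaE)
lemma sub_carr: "module.subspace (sc A) (carr A)" by (rule lsaE)
lemma sub_ev: "module.subspace (sc A) (ev A)" by (rule lsaE)
lemma sub_od: "module.subspace (sc A) (od A)" by (rule lsaE)
lemma evod: "ev A \<inter> od A = {0}" by (rule lsaE)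
lemma carr_eq: "carr A = {x + y | x y. x \<in> ev A \<and> y \<in> od A}" by (rule lsaE)
lemma br_closed: "x \<in> carr A \<Longrightarrow> y \<in> carr A \<Longrightarrow> br A x y \<in> carr A"
  by (rule lsaE) blast
lemma br_addL: "x \<in> carr A \<Longrightarrow> y \<in> carr A \<Longrightarrow> z \<in> carr A \<Longrightarrow> br A (x + y) z = br A x z + br A y z"
  by (rule lsaE) blast
lemma br_addR: "x \<in> carr A \<Longrightarrow> y \<in> carr A \<Longrightarrow> z \<in> carr A \<Longrightarrow> br A z (x + y) = br A z x + br A z y"
  by (rule lsaE) blast
lemma br_scL: "x \<in> carr A \<Longrightarrow> y \<in> carr A \<Longrightarrow> br A (sc A c x) y = sc A c (br A x y)"
  by (rule lsaE) blast
lemma br_scR: "x \<in> carr A \<Longrightarrow> y \<in> carr A \<Longrightarrow> br A x (sc A c y) = sc A c (br A x y)"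
  by (rule lsaE) blast
lemma br_par: "x \<in> par A p \<Longrightarrow> y \<in> par A q \<Longrightarrow> br A x y \<in> par A (p \<noteq> q)"
  by (rule lsaE) blast
lemma br_anti: "x \<in> par A p \<Longrightarrow> y \<in> par A q \<Longrightarrow> br A x y = - sgn_if (p \<and> q) (br A y x)"
  by (rule lsaE) blast
lemma jacobi:
  assumes "x \<in> par A p" "y \<in> par A q" "z \<in> par A r"
  shows "sgn_if (p \<and> r) (br A x (br A y z)) + sgn_if (q \<and> p) (br A y (br A z x))
        + sgn_if (r \<and> q) (br A z (br A x y)) = 0"
proof -
  have J: "\<forall>p q r. \<forall>x\<in>par A p. \<forall>y\<in>par A q. \<forall>z\<in>par A r.
        sgn_if (p \<and> r) (br A x (br A y z)) + sgn_if (q \<and> p) (br A y (br A z x))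
        + sgn_if (r \<and> q) (br A z (br A x y)) = 0" by (rule lsaE)
  show ?thesis by (rule J[rule_format, OF assms])
qed

lemma modA: "module (sc A)" using vsA module_iff_vector_space by blast

lemma zero_ev: "0 \<in> ev A" using sub_ev modA module.subspace_0 by blast
lemma zero_od: "0 \<in> od A" using sub_od modA module.subspace_0 by blast
lemma zero_carr: "0 \<in> carr A" using sub_carr modA module.subspace_0 by blast

lemma ev_carr: "x \<in> ev A \<Longrightarrow> x \<in> carr A"
  using carr_eq zero_od by (metis (mono_tags, lifting) add.right_neutral mem_Collect_eq)
lemma od_carr: "x \<in> od A \<Longrightarrow> x \<in> carr A"
  using carr_eq zero_ev by (metis (mono_tags, lifting) add.left_neutral mem_Collect_eq)
lemma par_carr: "x \<in> par A p \<Longrightarrow> x \<in> carr A"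
  by (cases p) (auto intro: ev_carr od_carr)

lemma carr_add: "x \<in> carr A \<Longrightarrow> y \<in> carr A \<Longrightarrow> x + y \<in> carr A"
  using sub_carr modA module.subspace_add by blast
lemma carr_diff: "x \<in> carr A \<Longrightarrow> y \<in> carr A \<Longrightarrow> x - y \<in> carr A"
  using sub_carr modA module.subspace_diff by blast
lemma carr_neg: "x \<in> carr A \<Longrightarrow> - x \<in> carr A"
  using sub_carr modA module.subspace_neg by blast
lemma carr_sc: "x \<in> carr A \<Longrightarrow> sc A c x \<in> carr A"
  using sub_carr modA module.subspace_scale by blast
lemma par_add: "x \<in> par A p \<Longrightarrow> y \<in> par A p \<Longrightarrow> x + y \<in> par A p"
  using sub_ev sub_od modA module.subspace_add by (cases p) auto
lemma par_diff: "x \<in> par A p \<Longrightarrow> y \<in> par A p \<Longrightarrow> x - y \<in> par A p"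
  using sub_ev sub_od modA module.subspace_diff by (cases p) auto
lemma par_neg: "x \<in> par A p \<Longrightarrow> - x \<in> par A p"
  using sub_ev sub_od modA module.subspace_neg by (cases p) auto
lemma par_sc: "x \<in> par A p \<Longrightarrow> sc A c x \<in> par A p"
  using sub_ev sub_od modA module.subspace_scale by (cases p) auto
lemma par_zero: "0 \<in> par A p" using zero_ev zero_od by (cases p) auto

lemma br_zeroL: "y \<in> carr A \<Longrightarrow> br A 0 y = 0"
  using br_addL[OF zero_carr zero_carr, of y] by simp
lemma br_zeroR: "y \<in> carr A \<Longrightarrow> br A y 0 = 0"
  using br_addR[OF zero_carr zero_carr, of y] by simp
lemma br_negL: "x \<in> carr A \<Longrightarrow> y \<in> carr A \<Longrightarrow> br A (- x) y = - br A x y"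
  using br_addL[OF carr_neg, of x x y] br_zeroL[of y] by (simp add: eq_neg_iff_add_eq_0 add.commute)
lemma br_negR: "x \<in> carr A \<Longrightarrow> y \<in> carr A \<Longrightarrow> br A y (- x) = - br A y x"
  using br_addR[OF carr_neg, of x x y] br_zeroR[of y] by (simp add: eq_neg_iff_add_eq_0 add.commute)
lemma br_diffL: "x \<in> carr A \<Longrightarrow> y \<in> carr A \<Longrightarrow> z \<in> carr A \<Longrightarrow> br A (x - y) z = br A x z - br A y z"
  using br_addL[OF _ carr_neg, of x y z] br_negL[of y z] by simp
lemma br_diffR: "x \<in> carr A \<Longrightarrow> y \<in> carr A \<Longrightarrow> z \<in> carr A \<Longrightarrow> br A z (x - y) = br A z x - br A z y"
  using br_addR[OF _ carr_neg, of x y z] br_negR[of y z] by simp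

lemma decomp: "x \<in> carr A \<Longrightarrow> \<exists>a b. a \<in> ev A \<and> b \<in> od A \<and> x = a + b"
  using carr_eq by blast

lemma uniq: "a \<in> ev A \<Longrightarrow> b \<in> od A \<Longrightarrow> a' \<in> ev A \<Longrightarrow> b' \<in> od A \<Longrightarrow> a + b = a' + b' \<Longrightarrow> a = a' \<and> b = b'"
proof -
  assume h: "a \<in> ev A" "b \<in> od A" "a' \<in> ev A" "b' \<in> od A" "a + b = a' + b'"
  have "a - a' = b' - b" using h(5) by (simp add: algebra_simps)
  moreover have "a - a' \<in> ev A" using par_diff[of a False a'] h by simp
  moreover have "b' - b \<in> od A" using par_diff[of b' True b] h by simp
  ultimately have "b' - b \<in> ev A \<inter> od A" by simp
  then have "b' - b = 0" using evod by blast
  then show ?thesis using h(5) by simp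
qed

lemma zero_split: "u \<in> par A p \<Longrightarrow> v \<in> par A (\<not> p) \<Longrightarrow> u + v = 0 \<Longrightarrow> u = 0 \<and> v = 0"
  using uniq[of u v 0 0] uniq[of v u 0 0] zero_ev zero_od by (cases p) (auto simp: add.commute)

lemma center_R:
  assumes z: "z \<in> center A" and x: "x \<in> carr A"
  shows "br A x z = 0"
proof -
  from z have zc: "z \<in> carr A" and zb: "\<And>y. y \<in> carr A \<Longrightarrow> br A z y = 0" by (auto simp: center_def)
  obtain z0 z1 where z01: "z0 \<in> ev A" "z1 \<in> od A" "z = z0 + z1" using decomp[OF zc] by blast
  have hom: "br A z0 y = 0 \<and> br A z1 y = 0" if y: "y \<in> par A q" for y q
  proof -
    have "br A z0 y + br A z1 y = 0"
      using zb[OF par_carr[OF y]] br_addL[OF ev_carr od_carr par_carr[OF y], of z0 z1] z01 by simp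
    moreover have "br A z0 y \<in> par A q" using br_par[of z0 False y q] z01 y by simp
    moreover have "br A z1 y \<in> par A (\<not> q)" using br_par[of z1 True y q] z01 y by simp
    ultimately show ?thesis using zero_split by blast
  qed
  have hom2: "br A y z = 0" if y: "y \<in> par A q" for y q
  proof -
    have "br A y z0 = 0" using br_anti[OF y, of z0 False] hom[OF y] z01 by (simp add: sgn_if_def)
    moreover have "br A y z1 = 0" using br_anti[OF y, of z1 True] hom[OF y] z01 by (simp add: sgn_if_def)
    ultimately show ?thesis using br_addR[OF ev_carr od_carr par_carr[OF y], of z0 z1] z01 by simp
  qed
  obtain x0 x1 where x01: "x0 \<in> ev A" "x1 \<in> od A" "x = x0 + x1" using decomp[OF x] by blast
  show ?thesis using br_addL[OF ev_carr od_carr zc, of x0 x1] x01 hom2[of x0 False] hom2[of x1 True] by simp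
qed

end


lemma span_img:
  fixes s1 :: "'k::field \<Rightarrow> 'a::ab_group_add \<Rightarrow> 'a" and s2 :: "'k \<Rightarrow> 'b::ab_group_add \<Rightarrow> 'b"
  assumes m1: "module s1" and m2: "module s2" and C: "module.subspace s1 C" and SC: "S \<subseteq> C"
    and add: "\<forall>x\<in>C. \<forall>y\<in>C. f (x + y) = f x + f y"
    and scl: "\<forall>c. \<forall>x\<in>C. f (s1 c x) = s2 c (f x)"
    and x: "x \<in> module.span s1 S"
  shows "f x \<in> module.span s2 (f ` S)"
proof -
  have "f x \<in> module.span s2 (f ` S) \<and> x \<in> C"
  proof (rule module.span_induct_alt[OF m1 x])
    have "0 \<in> C" using C m1 module.subspace_0 by blast
    then have "f 0 = 0" using add by (metis add.right_neutral add_left_imp_eq)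
    then show "f 0 \<in> module.span s2 (f ` S) \<and> 0 \<in> C" using \<open>0 \<in> C\<close> module.span_zero[OF m2] by simp
  next
    fix c a y assume a: "a \<in> S" and y: "f y \<in> module.span s2 (f ` S) \<and> y \<in> C"
    have aC: "a \<in> C" using a SC by auto
    have sC: "s1 c a \<in> C" using C m1 module.subspace_scale aC by blast
    have "f (s1 c a + y) = s2 c (f a) + f y" using add sC y scl aC by simp
    moreover have "s2 c (f a) \<in> module.span s2 (f ` S)"
      using module.span_scale[OF m2] module.span_base[OF m2] a by blast
    ultimately show "f (s1 c a + y) \<in> module.span s2 (f ` S) \<and> s1 c a + y \<in> C"
      using module.span_add[OF m2] y module.subspace_add[OF m1 C sC] by auto
  qed
  then show ?thesis by simp
qed

lemma span_img_rev:
  fixes s1 :: "'k::field \<Rightarrow> 'a::ab_group_add \<Rightarrow> 'a" and s2 :: "'k \<Rightarrow> 'b::ab_group_add \<Rightarrow> 'b"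
  assumes m1: "module s1" and m2: "module s2" and C: "module.subspace s1 C" and SC: "S \<subseteq> C"
    and add: "\<forall>x\<in>C. \<forall>y\<in>C. f (x + y) = f x + f y"
    and scl: "\<forall>c. \<forall>x\<in>C. f (s1 c x) = s2 c (f x)"
    and y: "y \<in> module.span s2 (f ` S)"
  shows "\<exists>x\<in>module.span s1 S. f x = y"
proof (rule module.span_induct_alt[OF m2 y])
  have "0 \<in> C" using C m1 module.subspace_0 by blast
  then have "f 0 = 0" using add by (metis add.right_neutral add_left_imp_eq)
  then show "\<exists>x\<in>module.span s1 S. f x = 0" using module.span_zero[OF m1] by blast
next
  fix c b y assume b: "b \<in> f ` S" and y: "\<exists>x\<in>module.span s1 S. f x = y"
  obtain a where a: "a \<in> S" "b = f a" using b by blast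
  obtain x where x: "x \<in> module.span s1 S" "f x = y" using y by blast
  have spC: "module.span s1 S \<subseteq> C" using module.span_minimal[OF m1 SC C] .
  have aC: "a \<in> C" using a SC by auto
  have sC: "s1 c a \<in> C" using C m1 module.subspace_scale aC by blast
  have "f (s1 c a + x) = s2 c b + y" using add sC x spC scl aC a by auto
  moreover have "s1 c a + x \<in> module.span s1 S"
    using module.span_add[OF m1] module.span_scale[OF m1] module.span_base[OF m1] a x by blast
  ultimately show "\<exists>x\<in>module.span s1 S. f x = s2 c b + y" by blast
qed

lemma homD:
  assumes "lsa_hom A B f"
  shows "\<And>x. x \<in> carr A \<Longrightarrow> f x \<in> carr B" "\<And>x. x \<in> ev A \<Longrightarrow> f x \<in> ev B"
    "\<And>x. x \<in> od A \<Longrightarrow> f x \<in> od B"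
    "\<forall>x\<in>carr A. \<forall>y\<in>carr A. f (x + y) = f x + f y"
    "\<forall>c. \<forall>x\<in>carr A. f (sc A c x) = sc B c (f x)"
    "\<And>x y. x \<in> carr A \<Longrightarrow> y \<in> carr A \<Longrightarrow> f (br A x y) = br B (f x) (f y)"
  using assms unfolding lsa_hom_def by blast+

lemma hom_par: "lsa_hom A B f \<Longrightarrow> x \<in> par A p \<Longrightarrow> f x \<in> par B p"
  using homD(2,3) by (cases p) auto

lemma hom_zero: "lie_superalgebra A \<Longrightarrow> lsa_hom A B f \<Longrightarrow> f 0 = 0"
  using homD(4)[of A B f] zero_carr[of A] by (metis add.right_neutral add_left_imp_eq)

lemma hom_diff: "lie_superalgebra A \<Longrightarrow> lsa_hom A B f \<Longrightarrow> x \<in> carr A \<Longrightarrow> y \<in> carr A \<Longrightarrow> f (x - y) = f x - f y"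
  using homD(4)[of A B f] carr_diff[of A x y] by (metis diff_add_cancel eq_diff_eq)

lemma hom_comp: "lsa_hom A B f \<Longrightarrow> lsa_hom B C g \<Longrightarrow> lsa_hom A C (\<lambda>x. g (f x))"
  unfolding lsa_hom_def by (auto simp: image_subset_iff)

lemma span_carr: assumes A: "lie_superalgebra A" and S: "S \<subseteq> carr A"
  shows "module.span (sc A) S \<subseteq> carr A"
  using module.span_minimal[OF modA[OF A] S sub_carr[OF A]] .

lemma hom_span:
  assumes A: "lie_superalgebra A" and B: "lie_superalgebra B" and f: "lsa_hom A B f"
    and S: "S \<subseteq> carr A" and x: "x \<in> module.span (sc A) S"
  shows "f x \<in> module.span (sc B) (f ` S)"
  by (rule span_img[OF modA[OF A] modA[OF B] sub_carr[OF A] S homD(4)[OF f] homD(5)[OF f] x])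

lemma hom_span_rev:
  assumes A: "lie_superalgebra A" and B: "lie_superalgebra B" and f: "lsa_hom A B f"
    and S: "S \<subseteq> carr A" and y: "y \<in> module.span (sc B) (f ` S)"
  shows "\<exists>x\<in>module.span (sc A) S. f x = y"
  by (rule span_img_rev[OF modA[OF A] modA[OF B] sub_carr[OF A] S homD(4)[OF f] homD(5)[OF f] y])

lemma kerX:
  assumes A: "lie_superalgebra A" and K: "lie_superalgebra K" and L: "lie_superalgebra L"
    and bt: "lsa_hom A K bt" and ps: "lsa_hom K L ps" and kc: "lsa_ker K ps \<subseteq> center K"
    and sur: "phi ` carr A = carr L" and comm: "\<forall>x\<in>carr A. ps (bt x) = phi x"
  shows "lsa_ker K ps \<inter> brs K (carr K) (carr K) \<subseteq> bt ` (brs A (carr A) (carr A) \<inter> {x. phi x = 0})"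
proof -
  let ?GK = "{br K a b | a b. a \<in> carr K \<and> b \<in> carr K}"
  let ?GA = "{br A a b | a b. a \<in> carr A \<and> b \<in> carr A}"
  have GA: "?GA \<subseteq> carr A" using br_closed[OF A] by blast
  have split: "\<exists>f\<in>carr A. \<exists>z\<in>center K. a = bt f + z" if a: "a \<in> carr K" for a
  proof -
    have "ps a \<in> carr L" using homD(1)[OF ps a] .
    then obtain f where f: "f \<in> carr A" "phi f = ps a" using sur by force
    have bf: "bt f \<in> carr K" using homD(1)[OF bt f(1)] .
    have "ps (a - bt f) = 0" using hom_diff[OF K ps a bf] comm f by simp
    then have "a - bt f \<in> center K" using kc carr_diff[OF K a bf] by (auto simp: lsa_ker_def)
    then show ?thesis using f(1) by (intro bexI[of _ f] bexI[of _ "a - bt f"]) auto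
  qed
  have G: "?GK \<subseteq> bt ` ?GA"
  proof
    fix w assume "w \<in> ?GK"
    then obtain a b where ab: "a \<in> carr K" "b \<in> carr K" "w = br K a b" by blast
    obtain f z where fz: "f \<in> carr A" "z \<in> center K" "a = bt f + z" using split[OF ab(1)] by blast
    obtain g z' where gz: "g \<in> carr A" "z' \<in> center K" "b = bt g + z'" using split[OF ab(2)] by blast
    have zc: "z \<in> carr K" "z' \<in> carr K" using fz gz by (auto simp: center_def)
    have bf: "bt f \<in> carr K" "bt g \<in> carr K" using homD(1)[OF bt] fz gz by auto
    have "w = br K (bt f) (bt g + z') + br K z (bt g + z')"
      using ab fz gz br_addL[OF K bf(1) zc(1) carr_add[OF K bf(2) zc(2)]] by simp
    also have "br K z (bt g + z') = 0" using fz(2) carr_add[OF K bf(2) zc(2)] by (auto simp: center_def)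
    also have "br K (bt f) (bt g + z') = br K (bt f) (bt g) + br K (bt f) z'"
      using br_addR[OF K bf(2) zc(2) bf(1)] .
    also have "br K (bt f) z' = 0" using center_R[OF K gz(2) bf(1)] .
    finally have "w = bt (br A f g)" using homD(6)[OF bt fz(1) gz(1)] by simp
    then show "w \<in> bt ` ?GA" using fz gz by blast
  qed
  show ?thesis
  proof
    fix k assume k: "k \<in> lsa_ker K ps \<inter> brs K (carr K) (carr K)"
    then have "k \<in> module.span (sc K) (bt ` ?GA)"
      using module.span_mono[OF modA[OF K] G] by (auto simp: brs_def)
    then obtain x where x: "x \<in> brs A (carr A) (carr A)" "bt x = k"
      using hom_span_rev[OF A K bt GA] by (auto simp: brs_def)
    have "x \<in> carr A" using x(1) span_carr[OF A GA] by (auto simp: brs_def)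
    then have "phi x = 0" using comm x(2) k by (auto simp: lsa_ker_def)
    then show "k \<in> bt ` (brs A (carr A) (carr A) \<inter> {x. phi x = 0})" using x by blast
  qed
qed


lemma lift_par:
  assumes K: "lie_superalgebra K" and L: "lie_superalgebra L" and ps: "lsa_hom K L ps"
    and sur: "ps ` carr K = carr L" and l: "l \<in> par L p"
  shows "\<exists>k\<in>par K p. ps k = l"
proof -
  have "l \<in> carr L" using par_carr[OF L l] .
  then obtain k where k: "k \<in> carr K" "ps k = l" using sur by force
  obtain k0 k1 where kk: "k0 \<in> ev K" "k1 \<in> od K" "k = k0 + k1" using decomp[OF K k(1)] by blast
  have e: "ps k0 \<in> ev L" "ps k1 \<in> od L" using homD(2,3)[OF ps] kk by auto
  have s: "l = ps k0 + ps k1" using homD(4)[OF ps] kk k ev_carr[OF K] od_carr[OF K] by auto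
  show ?thesis
  proof (cases p)
    case True
    then have "0 + l = ps k0 + ps k1" using s by simp
    then have "ps k1 = l" using uniq[OF L zero_ev[OF L] _ e(1) e(2)] l True by auto
    then show ?thesis using kk True by auto
  next
    case False
    then have "l + 0 = ps k0 + ps k1" using s by simp
    then have "ps k0 = l" using uniq[OF L _ zero_od[OF L] e(1) e(2)] l False by auto
    then show ?thesis using kk False by auto
  qed
qed

lemma part2:
  fixes L :: "('k::field, 'l::ab_group_add) lsa"
    and F :: "('k, 'f::ab_group_add) lsa"
    and K :: "('k, 'kk::ab_group_add) lsa"
    and pi :: "'f \<Rightarrow> 'l"
  assumes L: "lie_superalgebra L"
    and free_l: "free_wrt TYPE('l) F X0 X1"
    and free_k: "free_wrt TYPE('kk) F X0 X1"
    and pi: "lsa_hom F L pi" "pi ` carr F = carr L"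
    and KC: "in_C L K psi"
  shows "\<exists>h. quot_hom F (lsa_ker F pi \<inter> brs F (carr F) (carr F)) (brs F (carr F) (lsa_ker F pi)) K h
     \<and> h ` (lsa_ker F pi \<inter> brs F (carr F) (carr F)) = lsa_ker K psi"
proof -
  note Dk = free_k[unfolded free_wrt_def]
  note Dl = free_l[unfolded free_wrt_def]
  have F: "lie_superalgebra F" using Dk by (rule conjunct1)
  have X: "X0 \<subseteq> ev F" "X1 \<subseteq> od F" "X0 \<inter> X1 = {}"
    using Dk[THEN conjunct2, THEN conjunct1] Dk[THEN conjunct2, THEN conjunct2, THEN conjunct1]
      Dk[THEN conjunct2, THEN conjunct2, THEN conjunct2, THEN conjunct1] by this+
  note Uk = Dk[THEN conjunct2, THEN conjunct2, THEN conjunct2, THEN conjunct2]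
  note Ul = Dl[THEN conjunct2, THEN conjunct2, THEN conjunct2, THEN conjunct2]
  have K: "lie_superalgebra K" and ps: "lsa_hom K L psi" "psi ` carr K = carr L"
    and kc: "lsa_ker K psi \<subseteq> brs K (carr K) (carr K) \<inter> center K"
    using KC unfolding in_C_def by blast+
  define g where "g x = (if x \<in> X0 then (SOME k. k \<in> ev K \<and> psi k = pi x) else (SOME k. k \<in> od K \<and> psi k = pi x))" for x
  have g0: "g x \<in> ev K \<and> psi (g x) = pi x" if x: "x \<in> X0" for x
  proof -
    have "pi x \<in> par L False" using homD(2)[OF pi(1)] X x by auto
    then have "\<exists>k. k \<in> ev K \<and> psi k = pi x" using lift_par[OF K L ps(1) ps(2)] by fastforce
    then show ?thesis using x unfolding g_def by (simp add: someI_ex[where P="\<lambda>k. k \<in> ev K \<and> psi k = pi x"])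
  qed
  have g1: "g x \<in> od K \<and> psi (g x) = pi x" if x: "x \<in> X1" for x
  proof -
    have "pi x \<in> par L True" using homD(3)[OF pi(1)] X x by auto
    then have "\<exists>k. k \<in> od K \<and> psi k = pi x" using lift_par[OF K L ps(1) ps(2)] by fastforce
    moreover have "x \<notin> X0" using X x by auto
    ultimately show ?thesis unfolding g_def by (simp add: someI_ex[where P="\<lambda>k. k \<in> od K \<and> psi k = pi x"])
  qed
  have "g ` X0 \<subseteq> ev K" "g ` X1 \<subseteq> od K" using g0 g1 by auto
  then have "lie_superalgebra K \<and> g ` X0 \<subseteq> ev K \<and> g ` X1 \<subseteq> od K" using K by simp
  then have "(\<exists>phi. lsa_hom F K phi \<and> (\<forall>x\<in>X0 \<union> X1. phi x = g x))"
    by (rule Uk[THEN spec[where x=K], THEN spec[where x=g], THEN mp, THEN conjunct1])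
  then obtain bt where bt: "lsa_hom F K bt" "\<forall>x\<in>X0 \<union> X1. bt x = g x" by blast
  have comm: "\<forall>y\<in>carr F. psi (bt y) = pi y"
  proof -
    have "pi ` X0 \<subseteq> ev L" "pi ` X1 \<subseteq> od L" using homD(2,3)[OF pi(1)] X by blast+
    then have "lie_superalgebra L \<and> pi ` X0 \<subseteq> ev L \<and> pi ` X1 \<subseteq> od L" using L by simp
    then have U: "\<forall>phi phi'. lsa_hom F L phi \<and> lsa_hom F L phi' \<and> (\<forall>x\<in>X0 \<union> X1. phi x = pi x \<and> phi' x = pi x)
           \<longrightarrow> (\<forall>y\<in>carr F. phi y = phi' y)"
      by (rule Ul[THEN spec[where x=L], THEN spec[where x=pi], THEN mp, THEN conjunct2])
    have e: "\<forall>x\<in>X0 \<union> X1. psi (bt x) = pi x \<and> pi x = pi x"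
    proof
      fix x assume x: "x \<in> X0 \<union> X1"
      show "psi (bt x) = pi x \<and> pi x = pi x"
      proof (cases "x \<in> X0")
        case True then show ?thesis using bt(2) g0 by simp
      next
        case False then have "x \<in> X1" using x by simp
        then show ?thesis using bt(2) g1 by simp
      qed
    qed
    have H: "lsa_hom F L (\<lambda>x. psi (bt x)) \<and> lsa_hom F L pi \<and> (\<forall>x\<in>X0 \<union> X1. psi (bt x) = pi x \<and> pi x = pi x)"
      using hom_comp[OF bt(1) ps(1)] pi(1) e by (intro conjI)
    show ?thesis using U[THEN spec, THEN spec, THEN mp, OF H] .
  qed
  let ?R = "lsa_ker F pi" and ?F' = "brs F (carr F) (carr F)" and ?FR = "brs F (carr F) (lsa_ker F pi)"
  have Rc: "?R \<subseteq> carr F" by (auto simp: lsa_ker_def)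
  have FR0: "bt x = 0" if x: "x \<in> ?FR" for x
  proof -
    let ?G = "{br F a b | a b. a \<in> carr F \<and> b \<in> ?R}"
    have G: "?G \<subseteq> carr F" using br_closed[OF F] Rc by blast
    have "bt ` ?G \<subseteq> {0}"
    proof
      fix w assume "w \<in> bt ` ?G"
      then obtain a b where ab: "a \<in> carr F" "b \<in> ?R" "w = bt (br F a b)" by blast
      have b: "b \<in> carr F" "pi b = 0" using ab(2) by (simp_all add: lsa_ker_def)
      have "bt b \<in> lsa_ker K psi" unfolding lsa_ker_def using homD(1)[OF bt(1) b(1)] comm b by simp
      then have cb: "bt b \<in> center K" using kc by blast
      have "w = br K (bt a) (bt b)" using ab homD(6)[OF bt(1) ab(1) b(1)] by simp
      then show "w \<in> {0}" using center_R[OF K cb homD(1)[OF bt(1) ab(1)]] by simp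
    qed
    have "bt x \<in> module.span (sc K) (bt ` ?G)" using hom_span[OF F K bt(1) G x[unfolded brs_def]] .
    then have "bt x \<in> module.span (sc K) {0}" using module.span_mono[OF modA[OF K] \<open>bt ` ?G \<subseteq> {0}\<close>] by blast
    then show ?thesis using module.span_empty[OF modA[OF K]] vector_space.span_insert_0[OF vsA[OF K], of "{}"] by simp
  qed
  have "quot_hom F (?R \<inter> ?F') ?FR K bt"
    unfolding quot_hom_def
  proof (intro conjI)
    show "bt ` (?R \<inter> ?F') \<subseteq> carr K" using homD(1)[OF bt(1)] Rc by blast
    show "bt ` (?R \<inter> ?F' \<inter> ev F) \<subseteq> ev K" using homD(2)[OF bt(1)] by blast
    show "bt ` (?R \<inter> ?F' \<inter> od F) \<subseteq> od K" using homD(3)[OF bt(1)] by blast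
    show "\<forall>x\<in>?R \<inter> ?F'. \<forall>y\<in>?R \<inter> ?F'. bt (x + y) = bt x + bt y" using homD(4)[OF bt(1)] Rc by blast
    show "\<forall>c. \<forall>x\<in>?R \<inter> ?F'. bt (sc F c x) = sc K c (bt x)" using homD(5)[OF bt(1)] Rc by blast
    show "\<forall>x\<in>?FR. bt x = 0" using FR0 by blast
    show "\<forall>x\<in>?R \<inter> ?F'. \<forall>y\<in>?R \<inter> ?F'. bt (br F x y) = br K (bt x) (bt y)" using homD(6)[OF bt(1)] Rc by blast
  qed
  moreover have "bt ` (?R \<inter> ?F') = lsa_ker K psi"
  proof
    show "bt ` (?R \<inter> ?F') \<subseteq> lsa_ker K psi"
    proof
      fix y assume "y \<in> bt ` (?R \<inter> ?F')"
      then obtain x where x: "x \<in> ?R" "y = bt x" by blast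
      have "x \<in> carr F" "pi x = 0" using x(1) by (simp_all add: lsa_ker_def)
      then show "y \<in> lsa_ker K psi" unfolding lsa_ker_def using x(2) comm homD(1)[OF bt(1)] by simp
    qed
    have kc2: "lsa_ker K psi \<subseteq> center K" using kc by blast
    have "lsa_ker K psi \<inter> brs K (carr K) (carr K) \<subseteq> bt ` (?F' \<inter> {x. pi x = 0})"
      by (rule kerX[OF F K L bt(1) ps(1) kc2 pi(2) comm])
    then have k: "lsa_ker K psi \<subseteq> bt ` (?F' \<inter> {x. pi x = 0})" using kc by blast
    have Gc: "{br F a b | a b. a \<in> carr F \<and> b \<in> carr F} \<subseteq> carr F" using br_closed[OF F] by blast
    have F'c: "?F' \<subseteq> carr F" unfolding brs_def by (rule span_carr[OF F Gc])
    have "?F' \<inter> {x. pi x = 0} \<subseteq> ?R \<inter> ?F'" using F'c unfolding lsa_ker_def by blast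
    then show "lsa_ker K psi \<subseteq> bt ` (?R \<inter> ?F')" using k by blast
  qed
  ultimately show ?thesis by blast
qed


definition grd :: "('k::field, 'a::ab_group_add) lsa \<Rightarrow> 'a set \<Rightarrow> bool" where
  "grd A S \<longleftrightarrow> module.subspace (sc A) S \<and> S \<subseteq> carr A \<and>
     (\<forall>x\<in>S. \<exists>a b. a \<in> S \<inter> ev A \<and> b \<in> S \<inter> od A \<and> x = a + b)"

context
  fixes A :: "('k::field, 'a::ab_group_add) lsa"
  assumes A: "lie_superalgebra A"
begin

lemma grd_comp:
  assumes S: "grd A S" and x: "x \<in> S" and a: "a \<in> ev A" and b: "b \<in> od A" and e: "x = a + b"
  shows "a \<in> S \<and> b \<in> S"
proof -
  obtain a' b' where ab: "a' \<in> S \<inter> ev A" "b' \<in> S \<inter> od A" "x = a' + b'" using S x unfolding grd_def by blast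
  then have "a = a' \<and> b = b'" using uniq[OF A a b] e by auto
  then show ?thesis using ab by auto
qed

lemma grd_span:
  assumes G: "G \<subseteq> ev A \<union> od A"
  shows "grd A (module.span (sc A) G)"
proof -
  note m = modA[OF A]
  have Gc: "G \<subseteq> carr A" using G ev_carr[OF A] od_carr[OF A] by blast
  have "\<exists>a b. a \<in> module.span (sc A) G \<inter> ev A \<and> b \<in> module.span (sc A) G \<inter> od A \<and> x = a + b"
    if x: "x \<in> module.span (sc A) G" for x
  proof (rule module.span_induct_alt[OF m x])
    show "\<exists>a b. a \<in> module.span (sc A) G \<inter> ev A \<and> b \<in> module.span (sc A) G \<inter> od A \<and> 0 = a + b"
      using zero_ev[OF A] zero_od[OF A] module.span_zero[OF m] by (intro exI[of _ 0]) auto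
  next
    fix c g y assume g: "g \<in> G" and y: "\<exists>a b. a \<in> module.span (sc A) G \<inter> ev A \<and> b \<in> module.span (sc A) G \<inter> od A \<and> y = a + b"
    obtain a b where ab: "a \<in> module.span (sc A) G \<inter> ev A" "b \<in> module.span (sc A) G \<inter> od A" "y = a + b" using y by blast
    have cg: "sc A c g \<in> module.span (sc A) G" using module.span_scale[OF m] module.span_base[OF m] g by blast
    show "\<exists>a b. a \<in> module.span (sc A) G \<inter> ev A \<and> b \<in> module.span (sc A) G \<inter> od A \<and> sc A c g + y = a + b"
    proof (cases "g \<in> ev A")
      case True
      then have "sc A c g \<in> ev A" using par_sc[OF A, of g False] by simp
      then show ?thesis using ab cg par_add[OF A, of _ False] module.span_add[OF m]
        by (intro exI[of _ "sc A c g + a"] exI[of _ b]) (auto simp: add.assoc)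
    next
      case False
      then have "g \<in> od A" using G g by auto
      then have "sc A c g \<in> od A" using par_sc[OF A, of g True] by simp
      then show ?thesis using ab cg par_add[OF A, of _ True] module.span_add[OF m]
        by (intro exI[of _ a] exI[of _ "sc A c g + b"]) (auto simp: algebra_simps)
    qed
  qed
  then show ?thesis unfolding grd_def using span_carr[OF A Gc] module.subspace_span[OF m] by blast
qed

lemma grd_inter:
  assumes S: "grd A S" and T: "grd A T"
  shows "grd A (S \<inter> T)"
proof -
  have sub: "module.subspace (sc A) (S \<inter> T)"
    using S T module.subspace_inter[OF modA[OF A]] unfolding grd_def by blast
  have "\<exists>a b. a \<in> S \<inter> T \<inter> ev A \<and> b \<in> S \<inter> T \<inter> od A \<and> x = a + b" if x: "x \<in> S \<inter> T" for x
  proof -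
    obtain a b where ab: "a \<in> S \<inter> ev A" "b \<in> S \<inter> od A" "x = a + b" using S x unfolding grd_def by blast
    have "a \<in> T \<and> b \<in> T" using grd_comp[OF T _ _ _ ab(3)] x ab by auto
    then show ?thesis using ab by blast
  qed
  then show ?thesis using sub S unfolding grd_def by blast
qed

lemma grd_sum:
  assumes S: "grd A S" and T: "grd A T"
  shows "grd A {x + y | x y. x \<in> S \<and> y \<in> T}"
proof -
  note m = modA[OF A]
  have sub: "module.subspace (sc A) {x + y | x y. x \<in> S \<and> y \<in> T}"
    using S T vector_space.subspace_sums[OF vsA[OF A]] unfolding grd_def by blast
  have c: "{x + y | x y. x \<in> S \<and> y \<in> T} \<subseteq> carr A"
    using S T carr_add[OF A] unfolding grd_def by blast
  have "\<exists>a b. a \<in> {x + y | x y. x \<in> S \<and> y \<in> T} \<inter> ev A \<and> b \<in> {x + y | x y. x \<in> S \<and> y \<in> T} \<inter> od A \<and> z = a + b"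
    if z: "z \<in> {x + y | x y. x \<in> S \<and> y \<in> T}" for z
  proof -
    obtain x y where xy: "x \<in> S" "y \<in> T" "z = x + y" using z by blast
    obtain a b where ab: "a \<in> S \<inter> ev A" "b \<in> S \<inter> od A" "x = a + b" using S xy unfolding grd_def by blast
    obtain a' b' where ab': "a' \<in> T \<inter> ev A" "b' \<in> T \<inter> od A" "y = a' + b'" using T xy unfolding grd_def by blast
    have "a + a' \<in> ev A" "b + b' \<in> od A" using par_add[OF A, of a False a'] par_add[OF A, of b True b'] ab ab' by auto
    moreover have "z = (a + a') + (b + b')" using xy ab ab' by (simp add: algebra_simps)
    ultimately show ?thesis using ab ab' by blast
  qed
  then show ?thesis using sub c unfolding grd_def by blast
qed

lemma grd_compl:
  assumes U: "grd A U" and V: "grd A V" and UV: "U \<subseteq> V"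
  obtains C where "grd A C" "C \<subseteq> V" "U \<inter> C \<subseteq> {0}" "\<forall>x\<in>V. \<exists>u\<in>U. \<exists>c\<in>C. x = u + c"
proof -
  note vs = vsA[OF A] and m = modA[OF A]
  have Us: "module.subspace (sc A) U" using U unfolding grd_def by (rule conjunct1)
  have Vsub: "module.subspace (sc A) V" using V unfolding grd_def by (rule conjunct1)
  have subs: "module.subspace (sc A) (U \<inter> ev A)" "module.subspace (sc A) (V \<inter> ev A)"
     "module.subspace (sc A) (U \<inter> od A)" "module.subspace (sc A) (V \<inter> od A)"
    using module.subspace_inter[OF m Us sub_ev[OF A]] module.subspace_inter[OF m Vsub sub_ev[OF A]]
      module.subspace_inter[OF m Us sub_od[OF A]] module.subspace_inter[OF m Vsub sub_od[OF A]] by this+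
  have UV0: "U \<inter> ev A \<subseteq> V \<inter> ev A" and UV1: "U \<inter> od A \<subseteq> V \<inter> od A" using UV by blast+
  obtain C0 where C0: "module.subspace (sc A) C0" "C0 \<subseteq> V \<inter> ev A" "(U \<inter> ev A) \<inter> C0 \<subseteq> {0}"
      "\<forall>x\<in>V \<inter> ev A. \<exists>u\<in>U \<inter> ev A. \<exists>c\<in>C0. x = u + c"
    by (rule vector_space.compl_exists[OF vs subs(1) subs(2) UV0])
  obtain C1 where C1: "module.subspace (sc A) C1" "C1 \<subseteq> V \<inter> od A" "(U \<inter> od A) \<inter> C1 \<subseteq> {0}"
      "\<forall>x\<in>V \<inter> od A. \<exists>u\<in>U \<inter> od A. \<exists>c\<in>C1. x = u + c"
    by (rule vector_space.compl_exists[OF vs subs(3) subs(4) UV1])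
  define C where "C = {x + y | x y. x \<in> C0 \<and> y \<in> C1}"
  have C00: "0 \<in> C0" using module.subspace_0[OF m C0(1)] .
  have C10: "0 \<in> C1" using module.subspace_0[OF m C1(1)] .
  have g0: "grd A C0" unfolding grd_def
  proof (intro conjI)
    show "module.subspace (sc A) C0" by (rule C0(1))
    show "C0 \<subseteq> carr A" using C0(2) ev_carr[OF A] by blast
    show "\<forall>x\<in>C0. \<exists>a b. a \<in> C0 \<inter> ev A \<and> b \<in> C0 \<inter> od A \<and> x = a + b"
    proof
      fix x assume "x \<in> C0"
      then have "x \<in> C0 \<inter> ev A \<and> 0 \<in> C0 \<inter> od A \<and> x = x + 0" using C0(2) C00 zero_od[OF A] by auto
      then show "\<exists>a b. a \<in> C0 \<inter> ev A \<and> b \<in> C0 \<inter> od A \<and> x = a + b" by blast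
    qed
  qed
  have g1: "grd A C1" unfolding grd_def
  proof (intro conjI)
    show "module.subspace (sc A) C1" by (rule C1(1))
    show "C1 \<subseteq> carr A" using C1(2) od_carr[OF A] by blast
    show "\<forall>x\<in>C1. \<exists>a b. a \<in> C1 \<inter> ev A \<and> b \<in> C1 \<inter> od A \<and> x = a + b"
    proof
      fix x assume "x \<in> C1"
      then have "0 \<in> C1 \<inter> ev A \<and> x \<in> C1 \<inter> od A \<and> x = 0 + x" using C1(2) C10 zero_ev[OF A] by auto
      then show "\<exists>a b. a \<in> C1 \<inter> ev A \<and> b \<in> C1 \<inter> od A \<and> x = a + b" by blast
    qed
  qed
  have gC: "grd A C" unfolding C_def by (rule grd_sum[OF g0 g1])
  have CV: "C \<subseteq> V"
  proof
    fix x assume "x \<in> C"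
    then obtain a b where ab: "a \<in> C0" "b \<in> C1" "x = a + b" unfolding C_def by blast
    have "a \<in> V" "b \<in> V" using ab C0(2) C1(2) by blast+
    then show "x \<in> V" using ab(3) module.subspace_add[OF m Vsub] by simp
  qed
  have UC: "U \<inter> C \<subseteq> {0}"
  proof
    fix x assume x: "x \<in> U \<inter> C"
    then obtain a b where ab: "a \<in> C0" "b \<in> C1" "x = a + b" unfolding C_def by blast
    have ae: "a \<in> ev A" and bo: "b \<in> od A" using ab C0(2) C1(2) by blast+
    have "a \<in> U \<and> b \<in> U" using grd_comp[OF U _ ae bo ab(3)] x by blast
    then have "a \<in> (U \<inter> ev A) \<inter> C0" "b \<in> (U \<inter> od A) \<inter> C1" using ab ae bo by blast+
    then have "a = 0" "b = 0" using C0(3) C1(3) by blast+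
    then show "x \<in> {0}" using ab by simp
  qed
  have sp: "\<forall>x\<in>V. \<exists>u\<in>U. \<exists>c\<in>C. x = u + c"
  proof
    fix x assume x: "x \<in> V"
    obtain a b where ab: "a \<in> V \<inter> ev A" "b \<in> V \<inter> od A" "x = a + b" using V x unfolding grd_def by blast
    obtain u0 c0 where 0: "u0 \<in> U" "c0 \<in> C0" "a = u0 + c0" using C0(4) ab by blast
    obtain u1 c1 where 1: "u1 \<in> U" "c1 \<in> C1" "b = u1 + c1" using C1(4) ab by blast
    have "u0 + u1 \<in> U" using U 0 1 module.subspace_add[OF m] unfolding grd_def by blast
    moreover have "c0 + c1 \<in> C" using 0 1 unfolding C_def by blast
    moreover have "x = (u0 + u1) + (c0 + c1)" using ab 0 1 by (simp add: algebra_simps)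
    ultimately show "\<exists>u\<in>U. \<exists>c\<in>C. x = u + c" by blast
  qed
  show ?thesis using that gC CV UC sp by blast
qed

lemma grd_carr: "grd A (carr A)"
  unfolding grd_def using sub_carr[OF A] carr_eq[OF A] ev_carr[OF A] od_carr[OF A] by blast

lemma grd_ker:
  assumes B: "lie_superalgebra B" and f: "lsa_hom A B f"
  shows "grd A (lsa_ker A f)"
proof -
  note m = modA[OF A]
  have sub: "module.subspace (sc A) (lsa_ker A f)"
    unfolding module.subspace_def[OF m] lsa_ker_def
    using zero_carr[OF A] hom_zero[OF A f] carr_add[OF A] carr_sc[OF A] homD(4,5)[OF f]
      vector_space.scale_eq_0_iff[OF vsA[OF B]] by auto
  have "\<exists>a b. a \<in> lsa_ker A f \<inter> ev A \<and> b \<in> lsa_ker A f \<inter> od A \<and> x = a + b" if x: "x \<in> lsa_ker A f" for x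
  proof -
    have xc: "x \<in> carr A" using x by (simp add: lsa_ker_def)
    obtain a b where ab: "a \<in> ev A" "b \<in> od A" "x = a + b" using decomp[OF A xc] by blast
    have "f a + f b = 0" using x ab homD(4)[OF f] ev_carr[OF A] od_carr[OF A] by (auto simp: lsa_ker_def)
    moreover have "f a \<in> par B False" "f b \<in> par B True" using homD(2,3)[OF f] ab by auto
    ultimately have "f a = 0" "f b = 0" using zero_split[OF B, of "f a" False "f b"] by auto
    then show ?thesis using ab ev_carr[OF A] od_carr[OF A] by (auto simp: lsa_ker_def)
  qed
  then show ?thesis using sub unfolding grd_def lsa_ker_def by blast
qed

lemma grd_brs:
  assumes I: "grd A I" and J: "grd A J"
  shows "grd A (brs A I J)"
proof -
  note m = modA[OF A]
  let ?G = "{br A a b | a b. a \<in> I \<and> b \<in> J}"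
  let ?H = "{br A a b | a b. a \<in> I \<and> b \<in> J \<and> (\<exists>p q. a \<in> par A p \<and> b \<in> par A q)}"
  have Ic: "I \<subseteq> carr A" and Jc: "J \<subseteq> carr A" using I J unfolding grd_def by auto
  have H: "?H \<subseteq> ev A \<union> od A"
  proof
    fix w assume "w \<in> ?H"
    then obtain a b p q where "w = br A a b" "a \<in> par A p" "b \<in> par A q" by blast
    then have "w \<in> par A (p \<noteq> q)" using br_par[OF A] by blast
    then show "w \<in> ev A \<union> od A" by (cases "p \<noteq> q") auto
  qed
  have "?G \<subseteq> module.span (sc A) ?H"
  proof
    fix w assume "w \<in> ?G"
    then obtain a b where ab: "a \<in> I" "b \<in> J" "w = br A a b" by blast
    obtain a0 a1 where a: "a0 \<in> I \<inter> ev A" "a1 \<in> I \<inter> od A" "a = a0 + a1" using I ab unfolding grd_def by blast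
    obtain b0 b1 where b: "b0 \<in> J \<inter> ev A" "b1 \<in> J \<inter> od A" "b = b0 + b1" using J ab unfolding grd_def by blast
    have c: "a0 \<in> carr A" "a1 \<in> carr A" "b0 \<in> carr A" "b1 \<in> carr A" using a b Ic Jc by auto
    have "w = (br A a0 b0 + br A a0 b1) + (br A a1 b0 + br A a1 b1)"
      using ab a b br_addL[OF A c(1,2) carr_add[OF A c(3,4)]] br_addR[OF A c(3,4) c(1)] br_addR[OF A c(3,4) c(2)] by simp
    moreover have p: "a0 \<in> par A False" "a1 \<in> par A True" "b0 \<in> par A False" "b1 \<in> par A True" using a b by auto
    have ij: "a0 \<in> I" "a1 \<in> I" "b0 \<in> J" "b1 \<in> J" using a b by auto
    have "br A a0 b0 \<in> ?H" using p ij by blast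
    moreover have "br A a0 b1 \<in> ?H" using p ij by blast
    moreover have "br A a1 b0 \<in> ?H" using p ij by blast
    moreover have "br A a1 b1 \<in> ?H" using p ij by blast
    ultimately show "w \<in> module.span (sc A) ?H"
      using module.span_add[OF m] module.span_base[OF m] by simp
  qed
  then have "module.span (sc A) ?G \<subseteq> module.span (sc A) ?H"
    using module.span_minimal[OF m _ module.subspace_span[OF m]] by blast
  moreover have "module.span (sc A) ?H \<subseteq> module.span (sc A) ?G"
    by (rule module.span_mono[OF m]) blast
  ultimately have "module.span (sc A) ?G = module.span (sc A) ?H" by (rule antisym)
  then show ?thesis unfolding brs_def using grd_span[OF H] by simp
qed

lemma brs_swap:
  assumes J: "grd A J" and x: "x \<in> carr A" and r: "r \<in> J"
  shows "br A r x \<in> brs A (carr A) J"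
proof -
  note m = modA[OF A]
  have Jc: "J \<subseteq> carr A" using J unfolding grd_def by auto
  have hom: "br A u v \<in> brs A (carr A) J" if u: "u \<in> J \<inter> par A p" and v: "v \<in> par A q" for u v p q
  proof -
    have "br A v u \<in> {br A x y | x y. x \<in> carr A \<and> y \<in> J}" using u par_carr[OF A v] by blast
    then have "br A v u \<in> brs A (carr A) J" unfolding brs_def by (rule module.span_base[OF m])
    then have "- sgn_if (p \<and> q) (br A v u) \<in> brs A (carr A) J"
      unfolding brs_def sgn_if_def using module.span_neg[OF m] by auto
    then show ?thesis using br_anti[OF A, of u p v q] u v by simp
  qed
  obtain r0 r1 where rr: "r0 \<in> J \<inter> ev A" "r1 \<in> J \<inter> od A" "r = r0 + r1" using J r unfolding grd_def by blast
  obtain x0 x1 where xx: "x0 \<in> ev A" "x1 \<in> od A" "x = x0 + x1" using decomp[OF A x] by blast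
  have c: "r0 \<in> carr A" "r1 \<in> carr A" "x0 \<in> carr A" "x1 \<in> carr A" using rr xx Jc ev_carr[OF A] od_carr[OF A] by auto
  have "br A r x = (br A r0 x0 + br A r0 x1) + (br A r1 x0 + br A r1 x1)"
    using rr xx br_addL[OF A c(1,2) carr_add[OF A c(3,4)]] br_addR[OF A c(3,4) c(1)] br_addR[OF A c(3,4) c(2)] by simp
  moreover have "br A r0 x0 \<in> brs A (carr A) J" using hom[of r0 False x0 False] rr xx by simp
  moreover have "br A r0 x1 \<in> brs A (carr A) J" using hom[of r0 False x1 True] rr xx by simp
  moreover have "br A r1 x0 \<in> brs A (carr A) J" using hom[of r1 True x0 False] rr xx by simp
  moreover have "br A r1 x1 \<in> brs A (carr A) J" using hom[of r1 True x1 True] rr xx by simp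
  ultimately show ?thesis unfolding brs_def using module.span_add[OF m] by simp
qed

end


lemma kerfin:
  assumes T: "lie_superalgebra T" and L: "lie_superalgebra L" and Lf: "finite_dim L" and TC: "in_C L T lam"
  shows "\<exists>G. finite G \<and> G \<subseteq> carr T \<and> lsa_ker T lam \<subseteq> module.span (sc T) G"
proof -
  note m = modA[OF T]
  have lam: "lsa_hom T L lam" "lam ` carr T = carr L"
    and kc: "lsa_ker T lam \<subseteq> brs T (carr T) (carr T) \<inter> center T"
    using TC unfolding in_C_def by blast+
  obtain BL where BL: "finite BL" "BL \<subseteq> carr L" "carr L \<subseteq> module.span (sc L) BL"
    using Lf unfolding finite_dim_def by blast
  have "\<forall>l\<in>BL. \<exists>c. c \<in> carr T \<and> lam c = l"
  proof
    fix l assume "l \<in> BL"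
    then have "l \<in> lam ` carr T" using BL(2) lam(2) by blast
    then show "\<exists>c. c \<in> carr T \<and> lam c = l" by blast
  qed
  then obtain cf where cf: "\<forall>l\<in>BL. cf l \<in> carr T \<and> lam (cf l) = l" by metis
  define C0 where "C0 = cf ` BL"
  have C0: "finite C0" "C0 \<subseteq> carr T" "lam ` C0 = BL"
    unfolding C0_def using BL(1) cf by (auto simp: image_image)
  have spC: "module.span (sc T) C0 \<subseteq> carr T" by (rule span_carr[OF T C0(2)])
  have split: "\<exists>v\<in>module.span (sc T) C0. \<exists>z\<in>center T. t = v + z" if t: "t \<in> carr T" for t
  proof -
    have "lam t \<in> module.span (sc L) (lam ` C0)" using homD(1)[OF lam(1) t] BL(3) C0(3) by blast
    then obtain v where v: "v \<in> module.span (sc T) C0" "lam v = lam t"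
      using hom_span_rev[OF T L lam(1) C0(2)] by blast
    have vc: "v \<in> carr T" using v(1) spC by blast
    have "lam (t - v) = 0" using hom_diff[OF T lam(1) t vc] v(2) by simp
    then have "t - v \<in> lsa_ker T lam" unfolding lsa_ker_def using carr_diff[OF T t vc] by simp
    then have "t - v \<in> center T" using kc by blast
    then show ?thesis using v(1) by (intro bexI[of _ v] bexI[of _ "t - v"]) auto
  qed
  define G where "G = (\<lambda>(c, d). br T c d) ` (C0 \<times> C0)"
  have Gf: "finite G" unfolding G_def using C0(1) by simp
  have Gc: "G \<subseteq> carr T" unfolding G_def using C0(2) br_closed[OF T] by auto
  have Qs: "module.subspace (sc T) (module.span (sc T) G)" by (rule module.subspace_span[OF m])
  have cl1: "br T c v \<in> module.span (sc T) G" if c: "c \<in> C0" and v: "v \<in> module.span (sc T) C0" for c v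
  proof -
    have cc: "c \<in> carr T" using c C0(2) by blast
    have "br T c v \<in> module.span (sc T) (br T c ` C0)"
      by (rule span_img[OF m m sub_carr[OF T] C0(2), of "br T c", OF _ _ v])
        (auto simp: br_addR[OF T _ _ cc] br_scR[OF T cc])
    moreover have "br T c ` C0 \<subseteq> G" unfolding G_def using c by force
    ultimately show ?thesis using module.span_mono[OF m] by blast
  qed
  have cl2: "br T v w \<in> module.span (sc T) G" if v: "v \<in> module.span (sc T) C0" and w: "w \<in> module.span (sc T) C0" for v w
  proof -
    have wc: "w \<in> carr T" using w spC by blast
    have "br T v w \<in> module.span (sc T) ((\<lambda>u. br T u w) ` C0)"
      by (rule span_img[OF m m sub_carr[OF T] C0(2), of "\<lambda>u. br T u w", OF _ _ v])
        (auto simp: br_addL[OF T _ _ wc] br_scL[OF T _ wc])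
    moreover have "(\<lambda>u. br T u w) ` C0 \<subseteq> module.span (sc T) G" using cl1 w by blast
    ultimately show ?thesis using module.span_minimal[OF m _ Qs] by blast
  qed
  have "{br T a b | a b. a \<in> carr T \<and> b \<in> carr T} \<subseteq> module.span (sc T) G"
  proof
    fix x assume "x \<in> {br T a b | a b. a \<in> carr T \<and> b \<in> carr T}"
    then obtain a b where ab: "a \<in> carr T" "b \<in> carr T" "x = br T a b" by blast
    obtain v z where vz: "v \<in> module.span (sc T) C0" "z \<in> center T" "a = v + z" using split[OF ab(1)] by blast
    obtain w z' where wz: "w \<in> module.span (sc T) C0" "z' \<in> center T" "b = w + z'" using split[OF ab(2)] by blast
    have c: "v \<in> carr T" "w \<in> carr T" "z \<in> carr T" "z' \<in> carr T" using vz wz spC by (auto simp: center_def)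
    have "x = br T v (w + z') + br T z (w + z')" using ab vz wz br_addL[OF T c(1) c(3) carr_add[OF T c(2) c(4)]] by simp
    also have "br T z (w + z') = 0" using vz(2) carr_add[OF T c(2) c(4)] by (simp add: center_def)
    also have "br T v (w + z') = br T v w + br T v z'" by (rule br_addR[OF T c(2) c(4) c(1)])
    also have "br T v z' = 0" by (rule center_R[OF T wz(2) c(1)])
    finally have "x = br T v w" by simp
    then show "x \<in> module.span (sc T) G" using cl2[OF vz(1) wz(1)] by simp
  qed
  then have "brs T (carr T) (carr T) \<subseteq> module.span (sc T) G"
    unfolding brs_def by (rule module.span_minimal[OF m _ Qs])
  then show ?thesis using Gf Gc kc by blast
qed

lemma part1:
  fixes L :: "('k::field, 'l::ab_group_add) lsa"
    and F :: "('k, 'f::ab_group_add) lsa"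
    and T :: "('k, 't::ab_group_add) lsa"
    and pi :: "'f \<Rightarrow> 'l"
  assumes L: "lie_superalgebra L" and Lf: "finite_dim L" and F: "lie_superalgebra F"
    and pi: "lsa_hom F L pi" "pi ` carr F = carr L"
    and UT: "universal_wrt TYPE('f) L T lam"
  shows "quot_dim (sc F) (lsa_ker F pi \<inter> brs F (carr F) (carr F)) (brs F (carr F) (lsa_ker F pi))
     \<le> vector_space.dim (sc T) (lsa_ker T lam)"
proof -
  note m = modA[OF F]
  define R where "R = lsa_ker F pi"
  define F' where "F' = brs F (carr F) (carr F)"
  define FR where "FR = brs F (carr F) R"
  have gR: "grd F R" unfolding R_def by (rule grd_ker[OF F L pi(1)])
  have gF': "grd F F'" unfolding F'_def by (rule grd_brs[OF F grd_carr[OF F] grd_carr[OF F]])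
  have gFR: "grd F FR" unfolding FR_def by (rule grd_brs[OF F grd_carr[OF F] gR])
  have gRF': "grd F (R \<inter> F')" by (rule grd_inter[OF F gR gF'])
  have Rs: "module.subspace (sc F) R" using gR unfolding grd_def by (rule conjunct1)
  have F's: "module.subspace (sc F) F'" using gF' unfolding grd_def by (rule conjunct1)
  have FRs: "module.subspace (sc F) FR" using gFR unfolding grd_def by (rule conjunct1)
  have RFs: "module.subspace (sc F) (R \<inter> F')" using gRF' unfolding grd_def by (rule conjunct1)
  have Rc: "R \<subseteq> carr F" unfolding R_def lsa_ker_def by blast
  have RR: "x \<in> R \<longleftrightarrow> x \<in> carr F \<and> pi x = 0" for x unfolding R_def lsa_ker_def by blast
  have FRF': "FR \<subseteq> F'" unfolding FR_def F'_def brs_def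
    by (rule module.span_mono[OF m]) (use Rc in blast)
  have FRR: "FR \<subseteq> R" unfolding FR_def brs_def
  proof (rule module.span_minimal[OF m _ Rs])
    show "{br F x y |x y. x \<in> carr F \<and> y \<in> R} \<subseteq> R"
    proof
      fix w assume "w \<in> {br F x y |x y. x \<in> carr F \<and> y \<in> R}"
      then obtain a r where ar: "a \<in> carr F" "r \<in> R" "w = br F a r" by blast
      have rc: "r \<in> carr F" "pi r = 0" using ar(2) RR by auto
      have "pi w = br L (pi a) 0" using ar homD(6)[OF pi(1) ar(1) rc(1)] rc by simp
      also have "\<dots> = 0" using br_zeroR[OF L homD(1)[OF pi(1) ar(1)]] .
      finally show "w \<in> R" using RR ar br_closed[OF F ar(1) rc(1)] by simp
    qed
  qed
  obtain S where S: "grd F S" "S \<subseteq> R" "(R \<inter> F') \<inter> S \<subseteq> {0}" "\<forall>x\<in>R. \<exists>u\<in>R \<inter> F'. \<exists>c\<in>S. x = u + c"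
    by (rule grd_compl[OF F gRF' gR]) blast
  have Ss: "module.subspace (sc F) S" using S(1) unfolding grd_def by (rule conjunct1)
  define M where "M = {x + y | x y. x \<in> FR \<and> y \<in> S}"
  have gM: "grd F M" unfolding M_def by (rule grd_sum[OF F gFR S(1)])
  have Ms: "module.subspace (sc F) M" using gM unfolding grd_def by (rule conjunct1)
  have FRM: "FR \<subseteq> M"
  proof
    fix x assume "x \<in> FR"
    moreover have "0 \<in> S" using module.subspace_0[OF m Ss] .
    ultimately have "x \<in> FR \<and> 0 \<in> S \<and> x = x + 0" by simp
    then show "x \<in> M" unfolding M_def by blast
  qed
  have SM: "S \<subseteq> M"
  proof
    fix x assume "x \<in> S"
    moreover have "0 \<in> FR" using module.subspace_0[OF m FRs] .
    ultimately have "0 \<in> FR \<and> x \<in> S \<and> x = 0 + x" by simp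
    then show "x \<in> M" unfolding M_def by blast
  qed
  have MR: "M \<subseteq> R"
  proof
    fix x assume "x \<in> M"
    then obtain a b where ab: "a \<in> FR" "b \<in> S" "x = a + b" unfolding M_def by blast
    have "a \<in> R" "b \<in> R" using ab FRR S(2) by blast+
    then show "x \<in> R" using ab(3) module.subspace_add[OF m Rs] by simp
  qed
  have Mc: "M \<subseteq> carr F" using MR Rc by blast
  have brM: "br F f r \<in> M \<and> br F r f \<in> M" if f: "f \<in> carr F" and r: "r \<in> R" for f r
  proof -
    have "br F f r \<in> {br F x y |x y. x \<in> carr F \<and> y \<in> R}" using f r by blast
    then have "br F f r \<in> FR" unfolding FR_def brs_def by (rule module.span_base[OF m])
    moreover have "br F r f \<in> FR" unfolding FR_def by (rule brs_swap[OF F gR f r])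
    ultimately show ?thesis using FRM by blast
  qed
  have M3: "\<exists>u\<in>R \<inter> F'. r - u \<in> M" if r: "r \<in> R" for r
  proof -
    obtain u c where uc: "u \<in> R \<inter> F'" "c \<in> S" "r = u + c" using S(4) r by blast
    then have "r - u = c" by simp
    then show ?thesis using uc SM by blast
  qed
  have M4: "M \<inter> F' \<subseteq> FR"
  proof
    fix x assume x: "x \<in> M \<inter> F'"
    then obtain a b where ab: "a \<in> FR" "b \<in> S" "x = a + b" unfolding M_def by blast
    have "b = x - a" using ab(3) by simp
    moreover have "x - a \<in> F'" using module.subspace_diff[OF m F's] x ab(1) FRF' by blast
    ultimately have "b \<in> (R \<inter> F') \<inter> S" using ab(2) S(2) by blast
    then have "b = 0" using S(3) by blast
    then show "x \<in> FR" using ab by simp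
  qed
  obtain W where W: "grd F W" "W \<subseteq> carr F" "M \<inter> W \<subseteq> {0}" "\<forall>x\<in>carr F. \<exists>u\<in>M. \<exists>c\<in>W. x = u + c"
    by (rule grd_compl[OF F gM grd_carr[OF F] Mc]) blast
  have Ws: "module.subspace (sc F) W" using W(1) unfolding grd_def by (rule conjunct1)
  define P where "P x = (THE w. w \<in> W \<and> x - w \<in> M)" for x
  have Puniq: "w = w'" if "w \<in> W" "w' \<in> W" "x - w \<in> M" "x - w' \<in> M" for x w w'
  proof -
    have "w - w' = (x - w') - (x - w)" by simp
    then have "w - w' \<in> M" using module.subspace_diff[OF m Ms] that by metis
    moreover have "w - w' \<in> W" using module.subspace_diff[OF m Ws] that by blast
    ultimately have "w - w' = 0" using W(3) by blast
    then show ?thesis by simp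
  qed
  have P: "P x \<in> W \<and> x - P x \<in> M" if x: "x \<in> carr F" for x
  proof -
    obtain u c where uc: "u \<in> M" "c \<in> W" "x = u + c" using W(4) x by blast
    then have ex: "c \<in> W \<and> x - c \<in> M" by simp
    show ?thesis unfolding P_def
      by (rule theI[of "\<lambda>w. w \<in> W \<and> x - w \<in> M", OF ex]) (use Puniq ex in blast)
  qed
  have Peq: "P x = w" if "x \<in> carr F" "w \<in> W" "x - w \<in> M" for x w
    using Puniq[of "P x" w x] P[OF that(1)] that by blast
  have Pc: "P x \<in> carr F" if "x \<in> carr F" for x using P[OF that] W(2) by blast
  have Padd: "P (x + y) = P x + P y" if x: "x \<in> carr F" and y: "y \<in> carr F" for x y
  proof (rule Peq)
    show "x + y \<in> carr F" using carr_add[OF F x y] .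
    show "P x + P y \<in> W" using module.subspace_add[OF m Ws] P x y by blast
    have "x + y - (P x + P y) = (x - P x) + (y - P y)" by simp
    then show "x + y - (P x + P y) \<in> M" using module.subspace_add[OF m Ms] P x y by metis
  qed
  have Psc: "P (sc F c x) = sc F c (P x)" if x: "x \<in> carr F" for x c
  proof (rule Peq)
    show "sc F c x \<in> carr F" using carr_sc[OF F x] .
    show "sc F c (P x) \<in> W" using module.subspace_scale[OF m Ws] P x by blast
    have "sc F c x - sc F c (P x) = sc F c (x - P x)" using module.scale_right_diff_distrib[OF m] by metis
    then show "sc F c x - sc F c (P x) \<in> M" using module.subspace_scale[OF m Ms] P x by metis
  qed
  have Pneg: "P (- x) = - P x" if x: "x \<in> carr F" for x
  proof (rule Peq)
    show "- x \<in> carr F" using carr_neg[OF F x] .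
    show "- P x \<in> W" using module.subspace_neg[OF m Ws] P x by blast
    have "- x - - P x = - (x - P x)" by simp
    then show "- x - - P x \<in> M" using module.subspace_neg[OF m Ms] P x by metis
  qed
  have PM: "P x = 0" if "x \<in> M" for x
    using Peq[of x 0] that Mc module.subspace_0[OF m Ws] by auto
  have PW: "P x = x" if "x \<in> W" for x
    using Peq[of x x] that W(2) module.subspace_0[OF m Ms] by auto
  have Pcong: "P x = P y" if x: "x \<in> carr F" and y: "y \<in> carr F" and xy: "x - y \<in> M" for x y
  proof (rule Peq[OF x])
    show "P y \<in> W" using P y by blast
    have "x - P y = (x - y) + (y - P y)" by simp
    then show "x - P y \<in> M" using module.subspace_add[OF m Ms] P y xy by metis
  qed
  have Ppar: "P x \<in> par F p" if x: "x \<in> par F p" for x p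
  proof -
    have xc: "x \<in> carr F" using par_carr[OF F x] .
    obtain w0 w1 where w: "w0 \<in> W \<inter> ev F" "w1 \<in> W \<inter> od F" "P x = w0 + w1"
      using W(1) P[OF xc] unfolding grd_def by blast
    have xm: "x - P x \<in> M" using P[OF xc] by blast
    show ?thesis
    proof (cases p)
      case False
      have "x - P x = (x - w0) + (- w1)" using w(3) by simp
      moreover have "x - w0 \<in> ev F" using par_diff[OF F, of x False w0] x False w by simp
      moreover have "- w1 \<in> od F" using par_neg[OF F, of w1 True] w by simp
      ultimately have "- w1 \<in> M" using grd_comp[OF F gM xm] by blast
      then have "w1 \<in> M" using module.subspace_neg[OF m Ms] by fastforce
      then have "w1 = 0" using W(3) w by blast
      then show ?thesis using w False by simp
    next
      case True
      have "x - P x = (- w0) + (x - w1)" using w(3) by simp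
      moreover have "x - w1 \<in> od F" using par_diff[OF F, of x True w1] x True w by simp
      moreover have "- w0 \<in> ev F" using par_neg[OF F, of w0 False] w by simp
      ultimately have "- w0 \<in> M" using grd_comp[OF F gM xm] by blast
      then have "w0 \<in> M" using module.subspace_neg[OF m Ms] by fastforce
      then have "w0 = 0" using W(3) w by blast
      then show ?thesis using w True by simp
    qed
  qed
  have Psgn: "P (sgn_if b x) = sgn_if b (P x)" if "x \<in> carr F" for x b
    using Pneg[OF that] by (cases b) auto
  have piP: "pi (P u) = pi u" if u: "u \<in> carr F" for u
  proof -
    have "u - P u \<in> R" using P[OF u] MR by blast
    then have "pi (u - P u) = 0" using RR by blast
    then show ?thesis using hom_diff[OF F pi(1) u Pc[OF u]] by simp
  qed
  have Pbr: "P (br F a b) = P (br F (P a) (P b))" if a: "a \<in> carr F" and b: "b \<in> carr F" for a b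
  proof (rule Pcong)
    show "br F a b \<in> carr F" using br_closed[OF F a b] .
    show "br F (P a) (P b) \<in> carr F" using br_closed[OF F Pc[OF a] Pc[OF b]] .
    have "br F a b - br F (P a) (P b) = br F (a - P a) b + br F (P a) (b - P b)"
      using br_diffL[OF F a Pc[OF a] b] br_diffR[OF F b Pc[OF b] Pc[OF a]] by simp
    moreover have "br F (a - P a) b \<in> M" using brM[OF b] P[OF a] MR by blast
    moreover have "br F (P a) (b - P b) \<in> M" using brM[OF Pc[OF a]] P[OF b] MR by blast
    ultimately show "br F a b - br F (P a) (P b) \<in> M" using module.subspace_add[OF m Ms] by metis
  qed
  have Pbr2: "P (br F a (P (br F b c))) = P (br F a (br F b c))"
    if a: "a \<in> carr F" and b: "b \<in> carr F" and c: "c \<in> carr F" for a b c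
  proof (rule Pcong)
    have bc: "br F b c \<in> carr F" using br_closed[OF F b c] .
    show "br F a (P (br F b c)) \<in> carr F" using br_closed[OF F a Pc[OF bc]] .
    show "br F a (br F b c) \<in> carr F" using br_closed[OF F a bc] .
    have "br F a (P (br F b c)) - br F a (br F b c) = - br F a (br F b c - P (br F b c))"
      using br_diffR[OF F bc Pc[OF bc] a] by simp
    moreover have "br F a (br F b c - P (br F b c)) \<in> M" using brM[OF a] P[OF bc] MR by blast
    ultimately show "br F a (P (br F b c)) - br F a (br F b c) \<in> M" using module.subspace_neg[OF m Ms] by metis
  qed
  define K :: "('k, 'f) lsa" where "K = \<lparr>sc = sc F, carr = W, ev = W \<inter> ev F, od = W \<inter> od F, br = (\<lambda>x y. P (br F x y))\<rparr>"
  have Ks: "sc K = sc F" "carr K = W" "ev K = W \<inter> ev F" "od K = W \<inter> od F" "\<And>x y. br K x y = P (br F x y)"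
    unfolding K_def by simp_all
  have parK: "par K p = W \<inter> par F p" for p by (cases p) (simp_all add: Ks)
  have Wc: "x \<in> W \<Longrightarrow> x \<in> carr F" for x using W(2) by blast
  have Kl: "lie_superalgebra K" unfolding lie_superalgebra_def
  proof (intro conjI)
    show "vector_space (sc K)" using vsA[OF F] by (simp add: Ks)
    show "module.subspace (sc K) (carr K)" using Ws by (simp add: Ks)
    show "module.subspace (sc K) (ev K)" using module.subspace_inter[OF m Ws sub_ev[OF F]] by (simp add: Ks)
    show "module.subspace (sc K) (od K)" using module.subspace_inter[OF m Ws sub_od[OF F]] by (simp add: Ks)
    show "ev K \<inter> od K = {0}" using evod[OF F] module.subspace_0[OF m Ws] by (auto simp: Ks)
    show "carr K = {x + y |x y. x \<in> ev K \<and> y \<in> od K}"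
    proof
      show "carr K \<subseteq> {x + y |x y. x \<in> ev K \<and> y \<in> od K}" using W(1) unfolding grd_def Ks by blast
      show "{x + y |x y. x \<in> ev K \<and> y \<in> od K} \<subseteq> carr K" using module.subspace_add[OF m Ws] unfolding Ks by blast
    qed
    show "\<forall>x\<in>carr K. \<forall>y\<in>carr K. br K x y \<in> carr K"
      unfolding Ks using P br_closed[OF F] Wc by blast
    show "\<forall>x\<in>carr K. \<forall>y\<in>carr K. \<forall>z\<in>carr K.
        br K (x + y) z = br K x z + br K y z \<and> br K z (x + y) = br K z x + br K z y"
      unfolding Ks using Padd br_closed[OF F] br_addL[OF F] br_addR[OF F] Wc by simp
    show "\<forall>c. \<forall>x\<in>carr K. \<forall>y\<in>carr K.
        br K (sc K c x) y = sc K c (br K x y) \<and> br K x (sc K c y) = sc K c (br K x y)"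
      unfolding Ks using Psc br_closed[OF F] br_scL[OF F] br_scR[OF F] Wc by simp
    show "\<forall>p q. \<forall>x\<in>par K p. \<forall>y\<in>par K q. br K x y \<in> par K (p \<noteq> q)"
      unfolding parK Ks using Ppar br_par[OF F] P br_closed[OF F] Wc by blast
    show "\<forall>p q. \<forall>x\<in>par K p. \<forall>y\<in>par K q. br K x y = - sgn_if (p \<and> q) (br K y x)"
    proof (intro allI ballI)
      fix p q x y assume x: "x \<in> par K p" and y: "y \<in> par K q"
      have xx: "x \<in> par F p" "x \<in> carr F" and yy: "y \<in> par F q" "y \<in> carr F" using x y Wc unfolding parK by auto
      have "br K x y = P (- sgn_if (p \<and> q) (br F y x))" using br_anti[OF F xx(1) yy(1)] by (simp add: Ks)
      also have "\<dots> = - sgn_if (p \<and> q) (P (br F y x))"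
        using Pneg Psgn br_closed[OF F yy(2) xx(2)] carr_neg[OF F] by (cases "p \<and> q") (auto simp: sgn_if_def)
      finally show "br K x y = - sgn_if (p \<and> q) (br K y x)" by (simp add: Ks)
    qed
    show "\<forall>p q r. \<forall>x\<in>par K p. \<forall>y\<in>par K q. \<forall>z\<in>par K r.
        sgn_if (p \<and> r) (br K x (br K y z)) + sgn_if (q \<and> p) (br K y (br K z x))
        + sgn_if (r \<and> q) (br K z (br K x y)) = 0"
    proof (intro allI ballI)
      fix p q r x y z assume x: "x \<in> par K p" and y: "y \<in> par K q" and z: "z \<in> par K r"
      have xx: "x \<in> par F p" "x \<in> carr F" and yy: "y \<in> par F q" "y \<in> carr F" and zz: "z \<in> par F r" "z \<in> carr F"
        using x y z Wc unfolding parK by auto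
      let ?a = "br F x (br F y z)" and ?b = "br F y (br F z x)" and ?c = "br F z (br F x y)"
      have ac: "?a \<in> carr F" "?b \<in> carr F" "?c \<in> carr F" using br_closed[OF F] xx yy zz by blast+
      have sc: "sgn_if s u \<in> carr F" if "u \<in> carr F" for s u using carr_neg[OF F that] that by (cases s) auto
      have "sgn_if (p \<and> r) (br K x (br K y z)) + sgn_if (q \<and> p) (br K y (br K z x))
        + sgn_if (r \<and> q) (br K z (br K x y)) = sgn_if (p \<and> r) (P ?a) + sgn_if (q \<and> p) (P ?b) + sgn_if (r \<and> q) (P ?c)"
        using Pbr2 xx yy zz by (simp add: Ks)
      also have "\<dots> = P (sgn_if (p \<and> r) ?a) + P (sgn_if (q \<and> p) ?b) + P (sgn_if (r \<and> q) ?c)"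
        using Psgn ac by simp
      also have "\<dots> = P (sgn_if (p \<and> r) ?a + sgn_if (q \<and> p) ?b + sgn_if (r \<and> q) ?c)"
        using Padd sc ac carr_add[OF F] by simp
      also have "\<dots> = P 0" using jacobi[OF F xx(1) yy(1) zz(1)] by simp
      also have "\<dots> = 0" using PM module.subspace_0[OF m Ms] by blast
      finally show "sgn_if (p \<and> r) (br K x (br K y z)) + sgn_if (q \<and> p) (br K y (br K z x))
        + sgn_if (r \<and> q) (br K z (br K x y)) = 0" .
    qed
  qed
  have Khom: "lsa_hom K L pi" unfolding lsa_hom_def
  proof (intro conjI)
    show "pi ` carr K \<subseteq> carr L" using homD(1)[OF pi(1)] Wc by (auto simp: Ks)
    show "pi ` ev K \<subseteq> ev L" using homD(2)[OF pi(1)] by (auto simp: Ks)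
    show "pi ` od K \<subseteq> od L" using homD(3)[OF pi(1)] by (auto simp: Ks)
    show "\<forall>x\<in>carr K. \<forall>y\<in>carr K. pi (x + y) = pi x + pi y" using homD(4)[OF pi(1)] Wc by (simp add: Ks)
    show "\<forall>c. \<forall>x\<in>carr K. pi (sc K c x) = sc L c (pi x)" using homD(5)[OF pi(1)] Wc by (simp add: Ks)
    show "\<forall>x\<in>carr K. \<forall>y\<in>carr K. pi (br K x y) = br L (pi x) (pi y)"
      using homD(6)[OF pi(1)] piP br_closed[OF F] Wc by (simp add: Ks)
  qed
  have Ksur: "pi ` carr K = carr L"
  proof
    show "pi ` carr K \<subseteq> carr L" using homD(1)[OF pi(1)] Wc by (auto simp: Ks)
    show "carr L \<subseteq> pi ` carr K"
    proof
      fix l assume "l \<in> carr L"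
      then obtain f where f: "f \<in> carr F" "l = pi f" using pi(2) by blast
      then have "l = pi (P f)" using piP by simp
      then show "l \<in> pi ` carr K" using P[OF f(1)] by (auto simp: Ks)
    qed
  qed
  have kerK: "lsa_ker K pi = W \<inter> R" unfolding lsa_ker_def Ks using RR Wc by blast
  have kcent: "lsa_ker K pi \<subseteq> center K"
  proof
    fix z assume "z \<in> lsa_ker K pi"
    then have z: "z \<in> W" "z \<in> R" using kerK by auto
    have "br K z x = 0" if x: "x \<in> carr K" for x
    proof -
      have "br F z x \<in> M" using brM[of x z] x z by (auto simp: Ks dest: Wc)
      then show ?thesis using PM by (simp add: Ks)
    qed
    then show "z \<in> center K" unfolding center_def using z by (simp add: Ks)
  qed
  have kbrs: "lsa_ker K pi \<subseteq> brs K (carr K) (carr K)"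
  proof
    fix z assume "z \<in> lsa_ker K pi"
    then have z: "z \<in> W" "z \<in> R" using kerK by auto
    obtain u where u: "u \<in> R \<inter> F'" "z - u \<in> M" using M3[OF z(2)] by blast
    have uc: "u \<in> carr F" using u Rc by blast
    have "z = P u" using PW[OF z(1)] Pcong[OF Wc[OF z(1)] uc u(2)] by simp
    let ?GF = "{br F a b | a b. a \<in> carr F \<and> b \<in> carr F}"
    let ?GK = "{br K a b | a b. a \<in> carr K \<and> b \<in> carr K}"
    have GFc: "?GF \<subseteq> carr F" using br_closed[OF F] by blast
    have "u \<in> module.span (sc F) ?GF" using u unfolding F'_def brs_def by blast
    moreover have addP: "\<forall>x\<in>carr F. \<forall>y\<in>carr F. P (x + y) = P x + P y" using Padd by blast
    moreover have sclP: "\<forall>c. \<forall>x\<in>carr F. P (sc F c x) = sc F c (P x)" using Psc by blast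
    ultimately have "P u \<in> module.span (sc F) (P ` ?GF)"
      using span_img[OF m m sub_carr[OF F] GFc] by blast
    moreover have "P ` ?GF \<subseteq> ?GK"
    proof
      fix w assume "w \<in> P ` ?GF"
      then obtain a b where ab: "a \<in> carr F" "b \<in> carr F" "w = P (br F a b)" by blast
      then have "w = br K (P a) (P b)" using Pbr by (simp add: Ks)
      moreover have "P a \<in> carr K" "P b \<in> carr K" using P ab by (auto simp: Ks)
      ultimately show "w \<in> ?GK" by blast
    qed
    ultimately have "P u \<in> module.span (sc F) ?GK" using module.span_mono[OF m] by blast
    then show "z \<in> brs K (carr K) (carr K)" unfolding brs_def using \<open>z = P u\<close> by (simp add: Ks)
  qed
  have KC: "in_C L K pi" unfolding in_C_def using Kl Khom Ksur kcent kbrs by blast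
  note UD = UT[unfolded universal_wrt_def]
  have TC: "in_C L T lam" using UD by (rule conjunct1)
  have "\<exists>tau. lsa_hom T K tau \<and> (\<forall>x\<in>carr T. pi (tau x) = lam x)"
    using UD[THEN conjunct2, THEN spec[where x=K], THEN spec[where x=pi], THEN mp, OF KC] .
  then obtain tau where tau: "lsa_hom T K tau" "\<forall>x\<in>carr T. pi (tau x) = lam x" by blast
  have T: "lie_superalgebra T" and lam: "lam ` carr T = carr L" using TC unfolding in_C_def by blast+
  have "lsa_ker K pi \<inter> brs K (carr K) (carr K) \<subseteq> tau ` (brs T (carr T) (carr T) \<inter> {x. lam x = 0})"
    by (rule kerX[OF T Kl L tau(1) Khom kcent lam tau(2)])
  then have kt: "lsa_ker K pi \<subseteq> tau ` lsa_ker T lam"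
    using kbrs span_carr[OF T, of "{br T a b | a b. a \<in> carr T \<and> b \<in> carr T}"] br_closed[OF T]
    unfolding lsa_ker_def brs_def by blast
  obtain G where G: "finite G" "G \<subseteq> carr T" "lsa_ker T lam \<subseteq> module.span (sc T) G"
    using kerfin[OF T L Lf TC] by blast
  obtain Bk where Bk: "Bk \<subseteq> lsa_ker T lam" "module.independent (sc T) Bk" "lsa_ker T lam \<subseteq> module.span (sc T) Bk"
      "card Bk = vector_space.dim (sc T) (lsa_ker T lam)"
    by (rule vector_space.basis_exists[OF vsA[OF T]])
  have Bkf: "finite Bk"
    using vector_space.independent_span_bound[OF vsA[OF T] G(1) Bk(2)] Bk(1) G(3) by blast
  have Bkc: "Bk \<subseteq> carr T" using Bk(1) unfolding lsa_ker_def by blast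
  define E where "E = tau ` Bk"
  have kE: "lsa_ker K pi \<subseteq> module.span (sc F) E"
  proof
    fix y assume "y \<in> lsa_ker K pi"
    then obtain x where x: "x \<in> lsa_ker T lam" "y = tau x" using kt by blast
    have "tau x \<in> module.span (sc K) (tau ` Bk)" using hom_span[OF T Kl tau(1) Bkc] x(1) Bk(3) by blast
    then show "y \<in> module.span (sc F) E" using x(2) by (simp add: Ks E_def)
  qed
  have ER: "E \<subseteq> R"
  proof
    fix e assume "e \<in> E"
    then obtain b where b: "b \<in> Bk" "e = tau b" unfolding E_def by blast
    have "b \<in> carr T" "lam b = 0" using b(1) Bk(1) unfolding lsa_ker_def by auto
    then have "e \<in> W" "pi e = 0" using homD(1)[OF tau(1)] tau(2) b(2) by (auto simp: Ks)
    then show "e \<in> R" using RR Wc by blast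
  qed
  have "\<forall>e\<in>E. \<exists>u. u \<in> R \<inter> F' \<and> e - u \<in> M" using M3 ER by blast
  then obtain fe where fe: "\<forall>e\<in>E. fe e \<in> R \<inter> F' \<and> e - fe e \<in> M" by metis
  define B' where "B' = fe ` E"
  have B'RF: "B' \<subseteq> R \<inter> F'" unfolding B'_def using fe by blast
  have Ef: "finite E" unfolding E_def using Bkf by simp
  have B'f: "finite B'" unfolding B'_def using Ef by simp
  have spB': "module.span (sc F) B' \<subseteq> R \<inter> F'" by (rule module.span_minimal[OF m B'RF RFs])
  have approx: "\<exists>y'\<in>module.span (sc F) B'. y - y' \<in> M" if y: "y \<in> module.span (sc F) E" for y
  proof (rule module.span_induct_alt[OF m y])
    show "\<exists>y'\<in>module.span (sc F) B'. 0 - y' \<in> M"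
      using module.span_zero[OF m] module.subspace_0[OF m Ms] by force
  next
    fix c e y assume e: "e \<in> E" and "\<exists>y'\<in>module.span (sc F) B'. y - y' \<in> M"
    then obtain y' where y': "y' \<in> module.span (sc F) B'" "y - y' \<in> M" by blast
    have "sc F c (fe e) + y' \<in> module.span (sc F) B'"
      using module.span_add[OF m] module.span_scale[OF m] module.span_base[OF m] y'(1) e unfolding B'_def by blast
    moreover have "(sc F c e + y) - (sc F c (fe e) + y') = sc F c (e - fe e) + (y - y')"
      using module.scale_right_diff_distrib[OF m] by (simp add: algebra_simps)
    moreover have "sc F c (e - fe e) + (y - y') \<in> M"
      using module.subspace_add[OF m Ms] module.subspace_scale[OF m Ms] fe e y'(2) by blast
    ultimately show "\<exists>y'\<in>module.span (sc F) B'. sc F c e + y - y' \<in> M" by metis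
  qed
  have cover: "R \<inter> F' \<subseteq> module.span (sc F) (B' \<union> FR)"
  proof
    fix x assume x: "x \<in> R \<inter> F'"
    have xc: "x \<in> carr F" using x Rc by blast
    have "P x \<in> W" "pi (P x) = 0" using P[OF xc] piP[OF xc] x RR by auto
    then have "P x \<in> lsa_ker K pi" using Wc by (simp add: lsa_ker_def Ks)
    then have "P x \<in> module.span (sc F) E" using kE by blast
    then obtain y' where y': "y' \<in> module.span (sc F) B'" "P x - y' \<in> M" using approx by blast
    have "x - y' = (x - P x) + (P x - y')" by simp
    then have "x - y' \<in> M" using module.subspace_add[OF m Ms] P[OF xc] y'(2) by metis
    moreover have "x - y' \<in> F'" using module.subspace_diff[OF m F's] x y'(1) spB' by blast
    ultimately have "x - y' \<in> FR" using M4 by blast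
    then have "x - y' \<in> module.span (sc F) (B' \<union> FR)" using module.span_base[OF m] by blast
    moreover have "y' \<in> module.span (sc F) (B' \<union> FR)" using y'(1) module.span_mono[OF m, of B' "B' \<union> FR"] by blast
    ultimately have "y' + (x - y') \<in> module.span (sc F) (B' \<union> FR)" using module.span_add[OF m] by blast
    then show "x \<in> module.span (sc F) (B' \<union> FR)" by simp
  qed
  have "quot_dim (sc F) (R \<inter> F') FR \<le> card B'"
    unfolding quot_dim_def by (rule Least_le) (use B'f B'RF cover in blast)
  also have "card B' \<le> card E" unfolding B'_def by (rule card_image_le[OF Ef])
  also have "card E \<le> card Bk" unfolding E_def by (rule card_image_le[OF Bkf])
  also have "\<dots> = vector_space.dim (sc T) (lsa_ker T lam)" by (rule Bk(4))
  finally show ?thesis unfolding R_def F'_def FR_def .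
qed


theorem lemma4p3:
  fixes L :: "('k::field, 'l::ab_group_add) lsa"
    and F :: "('k, 'f::ab_group_add) lsa"
    and pi :: "'f \<Rightarrow> 'l"
    and X0 X1 :: "'f set"
  assumes char: "(2::'k) \<noteq> 0" "(3::'k) \<noteq> 0"
    and L: "lie_superalgebra L" "finite_dim L"
    and free_l: "free_wrt TYPE('l) F X0 X1"
    and free_f: "free_wrt TYPE('f) F X0 X1"
    and free_k: "free_wrt TYPE('kk::ab_group_add) F X0 X1"
    and pi: "lsa_hom F L pi" "pi ` carr F = carr L"
  defines "R \<equiv> lsa_ker F pi"
    and "F' \<equiv> brs F (carr F) (carr F)"
    and "FR \<equiv> brs F (carr F) (lsa_ker F pi)"
  shows "(\<forall>(T :: ('k, 't::ab_group_add) lsa) lam.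
            universal_wrt TYPE('f) L T lam \<longrightarrow>
            quot_dim (sc F) (R \<inter> F') FR \<le> vector_space.dim (sc T) (lsa_ker T lam))
       \<and> (\<forall>(K :: ('k, 'kk) lsa) psi. in_C L K psi \<longrightarrow>
            (\<exists>h. quot_hom F (R \<inter> F') FR K h \<and> h ` (R \<inter> F') = lsa_ker K psi))"
proof -
  have F: "lie_superalgebra F" using free_k unfolding free_wrt_def by (rule conjunct1)
  show ?thesis
  proof (intro conjI allI impI)
    fix T :: "('k, 't) lsa" and lam
    assume "universal_wrt TYPE('f) L T lam"
    then show "quot_dim (sc F) (R \<inter> F') FR \<le> vector_space.dim (sc T) (lsa_ker T lam)"
      unfolding R_def F'_def FR_def by (rule part1[OF L(1) L(2) F pi(1) pi(2)])
  next
    fix K :: "('k, 'kk) lsa" and psi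
    assume "in_C L K psi"
    then show "\<exists>h. quot_hom F (R \<inter> F') FR K h \<and> h ` (R \<inter> F') = lsa_ker K psi"
      unfolding R_def F'_def FR_def by (rule part2[OF L(1) free_l free_k pi(1) pi(2)])
  qed
qed

end
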